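(* Let $X\colon\mathbf{CommRing}\to\mathbf{Set}$ be a functor that preserves products, and let $p$ be a prime. Let $Z_{X,p}$ be the species such that a $Z_{X,p}$-structure on a finite set is a way to make that set into a ring $k_p$ that is a finite product of finite fields of characteristic $p$ together with an element of $X(k_p)$, and let $F_{X,p}$ be the species such that an $F_{X,p}$-structure on a finite set is a way to make that set into a field $k$ of characteristic $p$ together with an element of $X(k)$. Then $Z_{X,p}\cong\exp_D(F_{X,p})$.
   Context: A species is a functor from the groupoid of finite sets and bijections to $\mathbf{Set}$ (structures are transported along bijections); a Dirichlet species is one with value $\emptyset$ on $\emptyset$. The one-element ring counts as the empty product of fields. Dirichlet product: a cartesian decomposition of a finite set $S$ is an ordered pair $(\pi_1,\pi_2)$ of equivalence relations on $S$ such that each $\pi_1$-class meets each $\pi_2$-class in exactly one element; with $S_i$ the set of $\pi_i$-classes, $(F\cdot_D G)(S)=\coprod_{(\pi_1,\pi_2)}F(S_1)\times G(S_2)$. This is symmetric monoidal with unit $I$, where $I(S)$ is a singleton if $|S|=1$ and empty otherwise. Dirichlet exponential: $F^n_D=F\cdot_D\cdots\cdot_D F$ ($n$ factors) for $n\ge1$, $F^0_D=I$; $S_n$ acts on $F^n_D$ via the symmetry; $\exp_D(F)=\coprod_{n\ge0}F^n_D/S_n$, computed pointwise. *)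

theory Defs
  imports "HOL-Computational_Algebra.Primes" "HOL-Algebra.Algebra" "HOL-Library.Nat_Bijection" "HOL-Combinatorics.Permutations"
begin

definition algchar :: "('a, 'b) ring_scheme \<Rightarrow> nat" where
  "algchar R = (if \<exists>n>0. add_pow R (n::nat) \<one>\<^bsub>R\<^esub> = \<zero>\<^bsub>R\<^esub>
                  then (LEAST n. n > 0 \<and> add_pow R (n::nat) \<one>\<^bsub>R\<^esub> = \<zero>\<^bsub>R\<^esub>) else 0)"

text \<open>A ring structure on the set S: carrier S, operations undefined off S
  (so that a ring structure on S is determined by its operations on S).\<close>
definition ring_on :: "nat set \<Rightarrow> nat ring \<Rightarrow> bool" where
  "ring_on S R \<longleftrightarrow> carrier R = S \<and>
     (\<forall>a b. (a \<notin> S \<or> b \<notin> S) \<longrightarrow> monoid.mult R a b = undefined \<and> ring.add R a b = undefined)"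

definition transp_ring :: "(nat \<Rightarrow> nat) \<Rightarrow> nat ring \<Rightarrow> nat ring" where
  "transp_ring sg R =
    \<lparr> carrier = sg ` carrier R,
      monoid.mult = (\<lambda>a b. if a \<in> sg ` carrier R \<and> b \<in> sg ` carrier R
                then sg (monoid.mult R (inv_into (carrier R) sg a) (inv_into (carrier R) sg b))
                else undefined),
      monoid.one = sg (monoid.one R),
      ring.zero = sg (ring.zero R),
      ring.add = (\<lambda>a b. if a \<in> sg ` carrier R \<and> b \<in> sg ` carrier R
                then sg (ring.add R (inv_into (carrier R) sg a) (inv_into (carrier R) sg b))
                else undefined) \<rparr>"

text \<open>The category: commutative rings whose underlying set is a subset of nat,
  with ring homomorphisms (identified when they agree on the carrier).\<close>
definition is_functor ::
  "(nat ring \<Rightarrow> 'x set) \<Rightarrow> (nat ring \<Rightarrow> nat ring \<Rightarrow> (nat \<Rightarrow> nat) \<Rightarrow> 'x \<Rightarrow> 'x) \<Rightarrow> bool" where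
  "is_functor Xo Xm \<longleftrightarrow>
     (\<forall>R S f. cring R \<and> cring S \<and> f \<in> ring_hom R S \<longrightarrow> Xm R S f \<in> Xo R \<rightarrow> Xo S) \<and>
     (\<forall>R S f g. cring R \<and> cring S \<and> f \<in> ring_hom R S \<and> g \<in> ring_hom R S \<and>
         (\<forall>a\<in>carrier R. f a = g a) \<longrightarrow> (\<forall>x\<in>Xo R. Xm R S f x = Xm R S g x)) \<and>
     (\<forall>R. cring R \<longrightarrow> (\<forall>x\<in>Xo R. Xm R R id x = x)) \<and>
     (\<forall>R S T f g. cring R \<and> cring S \<and> cring T \<and> f \<in> ring_hom R S \<and> g \<in> ring_hom S T
         \<longrightarrow> (\<forall>x\<in>Xo R. Xm R T (g \<circ> f) x = Xm S T g (Xm R S f x)))"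

text \<open>A cone
  (R, p1 : R \<rightarrow> R1, p2 : R \<rightarrow> R2) in CommRing is a product cone iff
  x \<mapsto> (p1 x, p2 x) is a bijection carrier R \<rightarrow> carrier R1 \<times> carrier R2.\<close>
definition preserves_products ::
  "(nat ring \<Rightarrow> 'x set) \<Rightarrow> (nat ring \<Rightarrow> nat ring \<Rightarrow> (nat \<Rightarrow> nat) \<Rightarrow> 'x \<Rightarrow> 'x) \<Rightarrow> bool" where
  "preserves_products Xo Xm \<longleftrightarrow>
     (\<forall>T. cring T \<and> card (carrier T) = 1 \<longrightarrow> (\<exists>y. Xo T = {y})) \<and>
     (\<forall>R R1 R2 p1 p2. cring R \<and> cring R1 \<and> cring R2 \<and>
         p1 \<in> ring_hom R R1 \<and> p2 \<in> ring_hom R R2 \<and>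
         bij_betw (\<lambda>x. (p1 x, p2 x)) (carrier R) (carrier R1 \<times> carrier R2) \<longrightarrow>
         bij_betw (\<lambda>x. (Xm R R1 p1 x, Xm R R2 p2 x)) (Xo R) (Xo R1 \<times> Xo R2))"

text \<open>R is a finite product of finite fields of characteristic p (n = 0 allowed:
  the one-element ring is the empty product).\<close>
definition fin_prod_fin_fields :: "nat \<Rightarrow> nat ring \<Rightarrow> bool" where
  "fin_prod_fin_fields p R \<longleftrightarrow>
     (\<exists>n (K :: nat \<Rightarrow> nat ring) pr.
        (\<forall>i<n. field (K i) \<and> finite (carrier (K i)) \<and> algchar (K i) = p \<and>
               pr i \<in> ring_hom R (K i)) \<and>
        bij_betw (\<lambda>x. \<lambda>i\<in>{..<n}. pr i x) (carrier R) (PiE {..<n} (\<lambda>i. carrier (K i))))"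

definition Zsp :: "(nat ring \<Rightarrow> 'x set) \<Rightarrow> nat \<Rightarrow> nat set \<Rightarrow> (nat ring \<times> 'x) set" where
  "Zsp Xo p S = {(R, x). ring_on S R \<and> cring R \<and> fin_prod_fin_fields p R \<and> x \<in> Xo R}"

definition Fsp :: "(nat ring \<Rightarrow> 'x set) \<Rightarrow> nat \<Rightarrow> nat set \<Rightarrow> (nat ring \<times> 'x) set" where
  "Fsp Xo p S = {(K, x). ring_on S K \<and> field K \<and> algchar K = p \<and> x \<in> Xo K}"

definition transp_struct ::
  "(nat ring \<Rightarrow> nat ring \<Rightarrow> (nat \<Rightarrow> nat) \<Rightarrow> 'x \<Rightarrow> 'x) \<Rightarrow> (nat \<Rightarrow> nat) \<Rightarrow> nat ring \<times> 'x \<Rightarrow> nat ring \<times> 'x" where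
  "transp_struct Xm sg z = (transp_ring sg (fst z), Xm (fst z) (transp_ring sg (fst z)) sg (snd z))"

text \<open>The set of classes S // rel is encoded as a finite set of naturals, so that the
  species (defined on finite subsets of nat) can be evaluated on it.\<close>
definition enc_classes :: "nat set \<Rightarrow> (nat \<times> nat) set \<Rightarrow> nat set" where
  "enc_classes S rel = set_encode ` (S // rel)"

text \<open>Elements of F^n_D(S): lists [(pi_1,f_1),...,(pi_n,f_n)] where (pi_1,...,pi_n) is a
  cartesian decomposition of S (a \<mapsto> (class of a)_i is a bijection
  S \<rightarrow> S/pi_1 \<times> ... \<times> S/pi_n) and f_i an F-structure on S/pi_i.\<close>
definition DirPow :: "(nat set \<Rightarrow> 's set) \<Rightarrow> nat set \<Rightarrow> ((nat \<times> nat) set \<times> 's) list set" where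
  "DirPow F S = {ds. (\<forall>d\<in>set ds. equiv S (fst d) \<and> snd d \<in> F (enc_classes S (fst d))) \<and>
       bij_betw (\<lambda>a. map (\<lambda>d. fst d `` {a}) ds) S (listset (map (\<lambda>d. S // fst d) ds))}"

definition Sn_orbit :: "'b list \<Rightarrow> 'b list set" where
  "Sn_orbit ds = {permute_list t ds | t. t permutes {..<length ds}}"

definition expD :: "(nat set \<Rightarrow> 's set) \<Rightarrow> nat set \<Rightarrow> ((nat \<times> nat) set \<times> 's) list set set" where
  "expD F S = Sn_orbit ` DirPow F S"

definition transp_expD ::
  "((nat \<Rightarrow> nat) \<Rightarrow> 's \<Rightarrow> 's) \<Rightarrow> (nat \<Rightarrow> nat) \<Rightarrow> ((nat \<times> nat) set \<times> 's) list set
     \<Rightarrow> ((nat \<times> nat) set \<times> 's) list set" where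
  "transp_expD Ft sg Orb =
     map (\<lambda>d. ((\<lambda>(a, b). (sg a, sg b)) ` fst d,
              Ft (\<lambda>c. set_encode (sg ` set_decode c)) (snd d))) ` Orb"

definition species_iso ::
  "(nat set \<Rightarrow> 'a set) \<Rightarrow> ((nat \<Rightarrow> nat) \<Rightarrow> 'a \<Rightarrow> 'a) \<Rightarrow>
   (nat set \<Rightarrow> 'b set) \<Rightarrow> ((nat \<Rightarrow> nat) \<Rightarrow> 'b \<Rightarrow> 'b) \<Rightarrow> bool" where
  "species_iso A At B Bt \<longleftrightarrow>
     (\<exists>phi :: nat set \<Rightarrow> 'a \<Rightarrow> 'b.
        (\<forall>S. finite S \<longrightarrow> bij_betw (phi S) (A S) (B S)) \<and>
        (\<forall>S S' sg. finite S \<and> bij_betw sg S S' \<longrightarrow>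
            (\<forall>z\<in>A S. phi S' (At sg z) = Bt sg (phi S z))))"

end

theory Submission
  imports Defs
begin
definition transp' :: "('a \<Rightarrow> 'b) \<Rightarrow> 'a ring \<Rightarrow> 'b ring" where
  "transp' sg R =
    \<lparr> carrier = sg ` carrier R,
      monoid.mult = (\<lambda>a b. if a \<in> sg ` carrier R \<and> b \<in> sg ` carrier R
                then sg (monoid.mult R (inv_into (carrier R) sg a) (inv_into (carrier R) sg b))
                else undefined),
      monoid.one = sg (monoid.one R),
      ring.zero = sg (ring.zero R),
      ring.add = (\<lambda>a b. if a \<in> sg ` carrier R \<and> b \<in> sg ` carrier R
                then sg (ring.add R (inv_into (carrier R) sg a) (inv_into (carrier R) sg b))
                else undefined) \<rparr>"

lemma transp_ring_eq: "transp_ring = transp'"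
  by (intro ext) (simp add: transp_ring_def transp'_def)

lemma transp'_hom:
  assumes "inj_on sg (carrier R)" "ring R"
  shows "sg \<in> ring_iso R (transp' sg R)"
proof -
  interpret ring R by fact
  show ?thesis using assms unfolding ring_iso_def ring_hom_def transp'_def
    by (auto simp: bij_betw_def)
qed

lemma transp'_cring:
  assumes "inj_on sg (carrier R)" "cring R"
  shows "cring (transp' sg R)"
proof -
  have "cring ((transp' sg R)\<lparr>zero := sg \<zero>\<^bsub>R\<^esub>\<rparr>)"
    using cring.ring_iso_imp_img_cring[OF assms(2) transp'_hom[OF assms(1)]] assms(2) cring.axioms(1) by blast
  moreover have "(transp' sg R)\<lparr>zero := sg \<zero>\<^bsub>R\<^esub>\<rparr> = transp' sg R"
    by (simp add: transp'_def)
  ultimately show ?thesis by simp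
qed

lemma transp'_field:
  assumes "inj_on sg (carrier R)" "field R"
  shows "field (transp' sg R)"
proof -
  have "field ((transp' sg R)\<lparr>zero := sg \<zero>\<^bsub>R\<^esub>\<rparr>)"
    using field.ring_iso_imp_img_field[OF assms(2) transp'_hom[OF assms(1)]] assms(2)
    by (simp add: cring.axioms(1) domain.axioms(1) field.axioms(1))
  moreover have "(transp' sg R)\<lparr>zero := sg \<zero>\<^bsub>R\<^esub>\<rparr> = transp' sg R"
    by (simp add: transp'_def)
  ultimately show ?thesis by simp
qed

lemma transp'_inv_hom:
  assumes "inj_on sg (carrier R)" "ring R"
  shows "inv_into (carrier R) sg \<in> ring_hom (transp' sg R) R"
proof -
  interpret ring R by fact
  show ?thesis using assms unfolding ring_hom_def transp'_def
    by (auto simp: inv_into_f_f)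
qed

lemma ring_on_eq:
  fixes R R' :: "nat ring"
  assumes "ring_on S R" "ring_on S R'"
    "\<And>a b. a \<in> S \<Longrightarrow> b \<in> S \<Longrightarrow> a \<otimes>\<^bsub>R\<^esub> b = a \<otimes>\<^bsub>R'\<^esub> b"
    "\<And>a b. a \<in> S \<Longrightarrow> b \<in> S \<Longrightarrow> a \<oplus>\<^bsub>R\<^esub> b = a \<oplus>\<^bsub>R'\<^esub> b"
    "\<one>\<^bsub>R\<^esub> = \<one>\<^bsub>R'\<^esub>" "\<zero>\<^bsub>R\<^esub> = \<zero>\<^bsub>R'\<^esub>"
  shows "R = R'"
proof -
  have m: "monoid.mult R = monoid.mult R'"
    using assms(1,2,3) unfolding ring_on_def by (intro ext) metis
  have a: "ring.add R = ring.add R'"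
    using assms(1,2,4) unfolding ring_on_def by (intro ext) metis
  show ?thesis using m a assms(1,2,5,6) unfolding ring_on_def
    by (intro ring.equality) auto
qed

lemma in_listset_iff: "xs \<in> listset As \<longleftrightarrow> length xs = length As \<and> (\<forall>i<length As. xs ! i \<in> As ! i)"
proof (induction As arbitrary: xs)
  case Nil
  then show ?case by auto
next
  case (Cons A As)
  show ?case
  proof (cases xs)
    case Nil
    then show ?thesis by (auto simp: set_Cons_def)
  next
    case (Cons y ys)
    then show ?thesis using Cons.IH by (auto simp: set_Cons_def nth_Cons split: nat.splits)
  qed
qed

definition prodR :: "nat \<Rightarrow> (nat \<Rightarrow> 'a ring) \<Rightarrow> (nat \<Rightarrow> 'a) ring" where
  "prodR n K = \<lparr> carrier = PiE {..<n} (\<lambda>i. carrier (K i)),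
      monoid.mult = (\<lambda>f g. \<lambda>i\<in>{..<n}. f i \<otimes>\<^bsub>K i\<^esub> g i),
      monoid.one = (\<lambda>i\<in>{..<n}. \<one>\<^bsub>K i\<^esub>),
      ring.zero = (\<lambda>i\<in>{..<n}. \<zero>\<^bsub>K i\<^esub>),
      ring.add = (\<lambda>f g. \<lambda>i\<in>{..<n}. f i \<oplus>\<^bsub>K i\<^esub> g i) \<rparr>"

lemma prodR_cring:
  assumes "\<And>i. i < n \<Longrightarrow> cring (K i)"
  shows "cring (prodR n K)"
proof (rule cringI)
  show "abelian_group (prodR n K)"
  proof (rule abelian_groupI)
    fix x assume x: "x \<in> carrier (prodR n K)"
    show "\<exists>y\<in>carrier (prodR n K). y \<oplus>\<^bsub>prodR n K\<^esub> x = \<zero>\<^bsub>prodR n K\<^esub>"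
      apply (rule bexI[of _ "\<lambda>i\<in>{..<n}. \<ominus>\<^bsub>K i\<^esub> x i"])
      using x assms by (auto simp: prodR_def PiE_def Pi_def extensional_def fun_eq_iff
          intro!: cring.axioms(1)[THEN ring.ring_simprules(9)] cring.axioms(1)[THEN ring.ring_simprules(3)])
  qed (use assms in \<open>auto simp: prodR_def PiE_def Pi_def extensional_def fun_eq_iff
     cring.cring_simprules(1,2,8)\<close>;
     metis cring.cring_simprules(1,7,10,16))+
  show "comm_monoid (prodR n K)"
    by (rule comm_monoidI)
     (use assms in \<open>auto simp: prodR_def PiE_def Pi_def extensional_def fun_eq_iff
       cring.cring_simprules(5,6,12)\<close>; metis cring.cring_simprules(5,6,11,12,14) cring.axioms(1) ring.ring_simprules(26))+
  fix x y z assume "x \<in> carrier (prodR n K)" "y \<in> carrier (prodR n K)" "z \<in> carrier (prodR n K)"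
  then show "(x \<oplus>\<^bsub>prodR n K\<^esub> y) \<otimes>\<^bsub>prodR n K\<^esub> z = x \<otimes>\<^bsub>prodR n K\<^esub> z \<oplus>\<^bsub>prodR n K\<^esub> y \<otimes>\<^bsub>prodR n K\<^esub> z"
    using assms by (auto simp: prodR_def PiE_def Pi_def extensional_def fun_eq_iff
       cring.cring_simprules(1,5,13))
qed

lemma prodR_proj:
  assumes "i < n"
  shows "(\<lambda>f. f i) \<in> ring_hom (prodR n K) (K i)"
  using assms unfolding ring_hom_def prodR_def by auto

lemma add_pow_Suc': "add_pow R (Suc n) x = add_pow R n x \<oplus>\<^bsub>R\<^esub> x"
  by (simp add: add_pow_def)

lemma add_pow_0': "add_pow R (0::nat) x = \<zero>\<^bsub>R\<^esub>"
  by (simp add: add_pow_def)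

lemma hom_add_pow_one:
  assumes "h \<in> ring_hom A B" "ring A" "ring B"
  shows "h (add_pow A (n::nat) \<one>\<^bsub>A\<^esub>) = add_pow B n \<one>\<^bsub>B\<^esub> \<and> add_pow A n \<one>\<^bsub>A\<^esub> \<in> carrier A"
proof (induction n)
  case 0
  then show ?case using assms by (simp add: add_pow_0' ring_hom_zero ring.ring_simprules(2))
next
  case (Suc n)
  then show ?case using assms by (simp add: add_pow_Suc' ring_hom_add ring_hom_one ring.ring_simprules(1,6))
qed

lemma algchar_iso:
  assumes "h \<in> ring_hom A B" "inj_on h (carrier A)" "ring A" "ring B"
  shows "algchar A = algchar B"
proof -
  have eq: "(add_pow A (n::nat) \<one>\<^bsub>A\<^esub> = \<zero>\<^bsub>A\<^esub>) \<longleftrightarrow> (add_pow B n \<one>\<^bsub>B\<^esub> = \<zero>\<^bsub>B\<^esub>)" for n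
  proof -
    have 1: "h (add_pow A n \<one>\<^bsub>A\<^esub>) = add_pow B n \<one>\<^bsub>B\<^esub>" "add_pow A n \<one>\<^bsub>A\<^esub> \<in> carrier A"
      using hom_add_pow_one[OF assms(1,3,4)] by auto
    have 2: "h \<zero>\<^bsub>A\<^esub> = \<zero>\<^bsub>B\<^esub>" using ring_hom_zero[OF assms(1,3,4)] .
    have 3: "\<zero>\<^bsub>A\<^esub> \<in> carrier A" using assms(3) ring.ring_simprules(2) by blast
    show ?thesis using 1 2 3 assms(2) by (metis inj_on_def)
  qed
  show ?thesis unfolding algchar_def by (simp only: eq)
qed

definition kerrel :: "('a, 'b) ring_scheme \<Rightarrow> ('a \<Rightarrow> 'c) \<Rightarrow> ('a \<times> 'a) set" where
  "kerrel R q = {(a, b). a \<in> carrier R \<and> b \<in> carrier R \<and> q a = q b}"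

definition qmap :: "(nat \<times> nat) set \<Rightarrow> nat \<Rightarrow> nat" where
  "qmap \<pi> a = set_encode (\<pi> `` {a})"

definition rep :: "nat \<Rightarrow> nat" where
  "rep c = (SOME a. a \<in> set_decode c)"

definition qring :: "nat ring \<Rightarrow> (nat \<times> nat) set \<Rightarrow> nat ring" where
  "qring R \<pi> =
    \<lparr> carrier = enc_classes (carrier R) \<pi>,
      monoid.mult = (\<lambda>c d. if c \<in> enc_classes (carrier R) \<pi> \<and> d \<in> enc_classes (carrier R) \<pi>
                then qmap \<pi> (rep c \<otimes>\<^bsub>R\<^esub> rep d) else undefined),
      monoid.one = qmap \<pi> \<one>\<^bsub>R\<^esub>,
      ring.zero = qmap \<pi> \<zero>\<^bsub>R\<^esub>,
      ring.add = (\<lambda>c d. if c \<in> enc_classes (carrier R) \<pi> \<and> d \<in> enc_classes (carrier R) \<pi>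
                then qmap \<pi> (rep c \<oplus>\<^bsub>R\<^esub> rep d) else undefined) \<rparr>"

definition FP :: "nat ring \<Rightarrow> (nat \<times> nat) set set" where
  "FP R = {\<pi>. \<exists>q (K :: nat ring). field K \<and> q \<in> ring_hom R K \<and> q ` carrier R = carrier K \<and> \<pi> = kerrel R q}"

lemma kerrel_class:
  "a \<in> carrier R \<Longrightarrow> kerrel R q `` {a} = {b \<in> carrier R. q a = q b}"
  by (auto simp: kerrel_def)

lemma kerrel_equiv: "equiv (carrier R) (kerrel R q)"
  by (auto simp: kerrel_def equiv_def refl_on_def sym_def trans_def)

lemma enc_classes_qmap: "enc_classes S \<pi> = qmap \<pi> ` S"
  by (auto simp: enc_classes_def qmap_def quotient_def)

lemma qmap_kerrel:
  assumes "finite (carrier R)" "a \<in> carrier R" "b \<in> carrier R"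
  shows "qmap (kerrel R q) a = qmap (kerrel R q) b \<longleftrightarrow> q a = q b"
proof -
  have "qmap (kerrel R q) a = qmap (kerrel R q) b \<longleftrightarrow> {c \<in> carrier R. q a = q c} = {c \<in> carrier R. q b = q c}"
    unfolding qmap_def using assms by (simp add: kerrel_class set_encode_eq)
  also have "\<dots> \<longleftrightarrow> q a = q b"
  proof
    assume "{c \<in> carrier R. q a = q c} = {c \<in> carrier R. q b = q c}"
    then have "a \<in> {c \<in> carrier R. q b = q c}" using assms by blast
    then show "q a = q b" by simp
  qed auto
  finally show ?thesis .
qed

lemma rep_kerrel:
  assumes "finite (carrier R)" "a \<in> carrier R"
  shows "rep (qmap (kerrel R q) a) \<in> carrier R \<and> q (rep (qmap (kerrel R q) a)) = q a"
proof -
  have d: "set_decode (qmap (kerrel R q) a) = {b \<in> carrier R. q a = q b}"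
    unfolding qmap_def using assms by (simp add: kerrel_class)
  have "a \<in> set_decode (qmap (kerrel R q) a)" using d assms by simp
  then have "rep (qmap (kerrel R q) a) \<in> set_decode (qmap (kerrel R q) a)"
    unfolding rep_def by (rule someI)
  then show ?thesis using d by auto
qed

lemma qring_id:
  fixes R K :: "nat ring"
  assumes "ring R" "ring K" "q \<in> ring_hom R K" "q ` carrier R = carrier K"
    "ring_on (carrier K) K" "finite (carrier R)"
    "\<And>a. a \<in> carrier R \<Longrightarrow> q a = qmap (kerrel R q) a"
  shows "qring R (kerrel R q) = K"
proof -
  let ?\<pi> = "kerrel R q"
  have C: "enc_classes (carrier R) ?\<pi> = carrier K"
  proof -
    have "qmap ?\<pi> ` carrier R = q ` carrier R"
      by (rule image_cong) (simp_all only: assms(7) refl)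
    then show ?thesis using assms(4) by (simp only: enc_classes_qmap)
  qed
  have rep: "rep c \<in> carrier R \<and> q (rep c) = c" if "c \<in> carrier K" for c
  proof -
    have "c \<in> q ` carrier R" using that assms(4) by simp
    then obtain a where a: "a \<in> carrier R" "c = q a" by (rule imageE) simp
    have h: "q a = qmap ?\<pi> a" by (rule assms(7)[OF a(1)])
    have c: "c = qmap ?\<pi> a" using a(2) h by (rule trans)
    have "rep c \<in> carrier R" "q (rep c) = q a" using rep_kerrel[OF assms(6) a(1), of q] c by auto
    then show ?thesis using a(2) by simp
  qed
  show ?thesis
  proof (rule ring_on_eq[of "carrier K"])
    show "ring_on (carrier K) (qring R ?\<pi>)"
      unfolding ring_on_def qring_def using C by auto
    show "ring_on (carrier K) K" by fact
    fix a b assume ab: "a \<in> carrier K" "b \<in> carrier K"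
    show "a \<otimes>\<^bsub>qring R ?\<pi>\<^esub> b = a \<otimes>\<^bsub>K\<^esub> b"
    proof -
      have "a \<otimes>\<^bsub>qring R ?\<pi>\<^esub> b = qmap ?\<pi> (rep a \<otimes>\<^bsub>R\<^esub> rep b)"
        using ab C by (simp add: qring_def)
      also have "\<dots> = q (rep a \<otimes>\<^bsub>R\<^esub> rep b)"
        using assms(7) rep[OF ab(1)] rep[OF ab(2)] ring.ring_simprules(5)[OF assms(1)] by metis
      also have "\<dots> = q (rep a) \<otimes>\<^bsub>K\<^esub> q (rep b)"
        using ring_hom_mult[OF assms(3)] rep[OF ab(1)] rep[OF ab(2)] by blast
      finally show ?thesis using rep[OF ab(1)] rep[OF ab(2)] by metis
    qed
    show "a \<oplus>\<^bsub>qring R ?\<pi>\<^esub> b = a \<oplus>\<^bsub>K\<^esub> b"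
    proof -
      have "a \<oplus>\<^bsub>qring R ?\<pi>\<^esub> b = qmap ?\<pi> (rep a \<oplus>\<^bsub>R\<^esub> rep b)"
        using ab C by (simp add: qring_def)
      also have "\<dots> = q (rep a \<oplus>\<^bsub>R\<^esub> rep b)"
        using assms(7) rep[OF ab(1)] rep[OF ab(2)] ring.ring_simprules(1)[OF assms(1)] by metis
      also have "\<dots> = q (rep a) \<oplus>\<^bsub>K\<^esub> q (rep b)"
        using ring_hom_add[OF assms(3)] rep[OF ab(1)] rep[OF ab(2)] by blast
      finally show ?thesis using rep[OF ab(1)] rep[OF ab(2)] by metis
    qed
  next
    show "\<one>\<^bsub>qring R ?\<pi>\<^esub> = \<one>\<^bsub>K\<^esub>"
    proof -
      have "qmap ?\<pi> \<one>\<^bsub>R\<^esub> = q \<one>\<^bsub>R\<^esub>" using assms(7) ring.ring_simprules(6)[OF assms(1)] by metis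
      then show ?thesis using ring_hom_one[OF assms(3)] by (simp add: qring_def)
    qed
    show "\<zero>\<^bsub>qring R ?\<pi>\<^esub> = \<zero>\<^bsub>K\<^esub>"
    proof -
      have "qmap ?\<pi> \<zero>\<^bsub>R\<^esub> = q \<zero>\<^bsub>R\<^esub>" using assms(7) ring.ring_simprules(2)[OF assms(1)] by metis
      then show ?thesis using ring_hom_zero[OF assms(3,1,2)] by (simp add: qring_def)
    qed
  qed
qed

lemma ring_hom_cong:
  assumes "f \<in> ring_hom R S" "\<And>x. x \<in> carrier R \<Longrightarrow> f x = g x" "ring R"
  shows "g \<in> ring_hom R S"
proof (rule ring_hom_memI)
  fix x y assume xy: "x \<in> carrier R" "y \<in> carrier R"
  show "g x \<in> carrier S" using ring_hom_closed[OF assms(1) xy(1)] assms(2)[OF xy(1)] by simp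
  show "g (x \<otimes>\<^bsub>R\<^esub> y) = g x \<otimes>\<^bsub>S\<^esub> g y"
    using ring_hom_mult[OF assms(1) xy] assms(2) xy ring.ring_simprules(5)[OF assms(3) xy] by metis
  show "g (x \<oplus>\<^bsub>R\<^esub> y) = g x \<oplus>\<^bsub>S\<^esub> g y"
    using ring_hom_add[OF assms(1) xy] assms(2) xy ring.ring_simprules(1)[OF assms(3) xy] by metis
next
  show "g \<one>\<^bsub>R\<^esub> = \<one>\<^bsub>S\<^esub>"
    using ring_hom_one[OF assms(1)] assms(2) ring.ring_simprules(6)[OF assms(3)] by metis
qed

lemma qring_transp:
  fixes R K :: "nat ring"
  assumes "ring R" "field K" "q \<in> ring_hom R K" "q ` carrier R = carrier K" "finite (carrier R)"
  defines "\<tau> \<equiv> \<lambda>k. set_encode {a \<in> carrier R. q a = k}"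
  shows "inj_on \<tau> (carrier K)" "qring R (kerrel R q) = transp' \<tau> K"
proof -
  show inj: "inj_on \<tau> (carrier K)"
  proof (rule inj_onI)
    fix k1 k2 assume k: "k1 \<in> carrier K" "k2 \<in> carrier K" "\<tau> k1 = \<tau> k2"
    then have "{a \<in> carrier R. q a = k1} = {a \<in> carrier R. q a = k2}"
      unfolding \<tau>_def using assms(5) by (simp add: set_encode_eq)
    moreover obtain a where "a \<in> carrier R" "q a = k1" using k(1) assms(4) by (metis imageE)
    ultimately show "k1 = k2" by blast
  qed
  have fK: "cring K" using assms(2) field.axioms(1) domain.axioms(1) by blast
  have rK: "ring K" using fK cring.axioms(1) by blast
  let ?K' = "transp' \<tau> K"
  have cK': "cring ?K'" using transp'_cring[OF inj fK] .
  have rK': "ring ?K'" using cK' cring.axioms(1) by blast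
  have th: "\<tau> \<in> ring_hom K ?K'" using transp'_hom[OF inj rK] unfolding ring_iso_def by blast
  have hq: "\<tau> \<circ> q \<in> ring_hom R ?K'" using ring_hom_trans[OF assms(3) th] .
  have ker: "kerrel R (\<tau> \<circ> q) = kerrel R q"
    unfolding kerrel_def using inj assms(3) ring_hom_closed[OF assms(3)]
    by (auto simp: inj_on_def)
  have "qring R (kerrel R (\<tau> \<circ> q)) = ?K'"
  proof (rule qring_id[OF assms(1) rK' hq])
    show "(\<tau> \<circ> q) ` carrier R = carrier ?K'"
    proof -
      have "(\<tau> \<circ> q) ` carrier R = \<tau> ` (q ` carrier R)" by (rule image_comp[symmetric])
      then show ?thesis using assms(4) by (simp add: transp'_def)
    qed
    show "ring_on (carrier ?K') ?K'" by (simp add: ring_on_def transp'_def)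
    show "finite (carrier R)" by fact
    fix a assume a: "a \<in> carrier R"
    have "qmap (kerrel R q) a = set_encode {b \<in> carrier R. q a = q b}"
      unfolding qmap_def using a by (simp add: kerrel_class)
    also have "\<dots> = \<tau> (q a)" unfolding \<tau>_def by (metis (full_types))
    finally show "(\<tau> \<circ> q) a = qmap (kerrel R (\<tau> \<circ> q)) a" unfolding ker by simp
  qed
  then show "qring R (kerrel R q) = ?K'" unfolding ker .
qed

lemma quot_facts:
  fixes R K :: "nat ring"
  assumes "cring R" "field K" "q \<in> ring_hom R K" "q ` carrier R = carrier K" "finite (carrier R)"
  defines "\<pi> \<equiv> kerrel R q"
  shows "field (qring R \<pi>)" "cring (qring R \<pi>)" "qmap \<pi> \<in> ring_hom R (qring R \<pi>)"
    "algchar (qring R \<pi>) = algchar K" "ring_on (enc_classes (carrier R) \<pi>) (qring R \<pi>)"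
    "equiv (carrier R) \<pi>" "carrier (qring R \<pi>) = enc_classes (carrier R) \<pi>"
    "qmap \<pi> ` carrier R = enc_classes (carrier R) \<pi>"
proof -
  have rR: "ring R" using assms(1) cring.axioms(1) by blast
  define \<tau> where "\<tau> = (\<lambda>k. set_encode {a \<in> carrier R. q a = k})"
  note qt = qring_transp[OF rR assms(2,3,4,5), folded \<tau>_def \<pi>_def]
  have fK: "cring K" using assms(2) field.axioms(1) domain.axioms(1) by blast
  have rK: "ring K" using fK cring.axioms(1) by blast
  show f: "field (qring R \<pi>)" unfolding qt(2) by (rule transp'_field[OF qt(1) assms(2)])
  show c: "cring (qring R \<pi>)" using f field.axioms(1) domain.axioms(1) by blast
  have th: "\<tau> \<in> ring_hom K (qring R \<pi>)" using transp'_hom[OF qt(1) rK] unfolding ring_iso_def qt(2) by blast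
  have hq: "\<tau> \<circ> q \<in> ring_hom R (qring R \<pi>)" using ring_hom_trans[OF assms(3) th] .
  show "qmap \<pi> \<in> ring_hom R (qring R \<pi>)"
  proof (rule ring_hom_cong[OF hq _ rR])
    fix a assume a: "a \<in> carrier R"
    have "qmap \<pi> a = set_encode {b \<in> carrier R. q a = q b}"
      unfolding qmap_def \<pi>_def using a by (simp add: kerrel_class)
    also have "\<dots> = \<tau> (q a)" unfolding \<tau>_def by (metis (full_types))
    finally show "(\<tau> \<circ> q) a = qmap \<pi> a" by simp
  qed
  show "algchar (qring R \<pi>) = algchar K"
    using algchar_iso[OF th _ rK] qt(1) c cring.axioms(1) by (metis)
  show "ring_on (enc_classes (carrier R) \<pi>) (qring R \<pi>)"
    unfolding ring_on_def qring_def by auto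
  show "equiv (carrier R) \<pi>" unfolding \<pi>_def by (rule kerrel_equiv)
  show "carrier (qring R \<pi>) = enc_classes (carrier R) \<pi>" by (simp add: qring_def)
  show "qmap \<pi> ` carrier R = enc_classes (carrier R) \<pi>" by (simp add: enc_classes_qmap)
qed

lemma decomp_surj:
  fixes R :: "nat ring" and K :: "nat \<Rightarrow> nat ring"
  assumes B: "bij_betw (\<lambda>x. \<lambda>i\<in>{..<n}. pr i x) (carrier R) (PiE {..<n} (\<lambda>i. carrier (K i)))"
    and f: "f \<in> PiE {..<n} (\<lambda>i. carrier (K i))"
  shows "\<exists>x\<in>carrier R. \<forall>i<n. pr i x = f i"
proof -
  have "f \<in> (\<lambda>x. \<lambda>i\<in>{..<n}. pr i x) ` carrier R" using B f by (simp add: bij_betw_def)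
  then obtain x where x: "x \<in> carrier R" "f = (\<lambda>i\<in>{..<n}. pr i x)" by (rule imageE) simp
  show ?thesis using x by auto
qed

lemma decomp_inj:
  fixes R :: "nat ring" and K :: "nat \<Rightarrow> nat ring"
  assumes B: "bij_betw (\<lambda>x. \<lambda>i\<in>{..<n}. pr i x) (carrier R) (PiE {..<n} (\<lambda>i. carrier (K i)))"
    and "x \<in> carrier R" "y \<in> carrier R" "\<And>i. i < n \<Longrightarrow> pr i x = pr i y"
  shows "x = y"
proof -
  have "(\<lambda>i\<in>{..<n}. pr i x) = (\<lambda>i\<in>{..<n}. pr i y)" using assms(4) by (intro restrict_ext) simp
  then show ?thesis using B assms(2,3) unfolding bij_betw_def inj_on_def by blast
qed

lemma decomp_FP:
  fixes R :: "nat ring" and K :: "nat \<Rightarrow> nat ring"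
  assumes cR: "cring R"
    and K: "\<And>i. i < n \<Longrightarrow> field (K i)" "\<And>i. i < n \<Longrightarrow> pr i \<in> ring_hom R (K i)"
    and B: "bij_betw (\<lambda>x. \<lambda>i\<in>{..<n}. pr i x) (carrier R) (PiE {..<n} (\<lambda>i. carrier (K i)))"
  shows "\<And>i. i < n \<Longrightarrow> pr i ` carrier R = carrier (K i)"
    "inj_on (\<lambda>i. kerrel R (pr i)) {..<n}"
    "FP R = (\<lambda>i. kerrel R (pr i)) ` {..<n}"
proof -
  interpret R: cring R by fact
  have fK: "field (K i)" if "i < n" for i using K(1) that .
  have rK: "ring (K i)" if "i < n" for i using fK[OF that]
    by (simp add: cring.axioms(1) domain.axioms(1) field.axioms(1))
  have hK: "ring_hom_ring R (K i) (pr i)" if "i < n" for i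
    using rK[OF that] K(2)[OF that] R.ring_axioms by (simp add: ring_hom_ringI2)
  show surj: "pr i ` carrier R = carrier (K i)" if i: "i < n" for i
  proof
    show "pr i ` carrier R \<subseteq> carrier (K i)" using ring_hom_closed[OF K(2)[OF i]] by blast
    show "carrier (K i) \<subseteq> pr i ` carrier R"
    proof
      fix k assume k: "k \<in> carrier (K i)"
      let ?f = "\<lambda>j\<in>{..<n}. if j = i then k else \<one>\<^bsub>K j\<^esub>"
      have "?f \<in> PiE {..<n} (\<lambda>j. carrier (K j))"
        using k rK by (auto simp: ring.ring_simprules(6))
      then obtain x where "x \<in> carrier R" "\<And>j. j < n \<Longrightarrow> pr j x = ?f j"
        using decomp_surj[OF B] by blast
      then show "k \<in> pr i ` carrier R" using i by force
    qed
  qed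
  have idem: "\<exists>e\<in>carrier R. pr i e = \<one>\<^bsub>K i\<^esub> \<and> (\<forall>j<n. j \<noteq> i \<longrightarrow> pr j e = \<zero>\<^bsub>K j\<^esub>)" if i: "i < n" for i
  proof -
    let ?f = "\<lambda>j\<in>{..<n}. if j = i then \<one>\<^bsub>K j\<^esub> else \<zero>\<^bsub>K j\<^esub>"
    have "?f \<in> PiE {..<n} (\<lambda>j. carrier (K j))"
      using rK by (auto simp: ring.ring_simprules(2,6))
    then obtain x where "x \<in> carrier R" "\<And>j. j < n \<Longrightarrow> pr j x = ?f j"
      using decomp_surj[OF B] by blast
    then show ?thesis using i by force
  qed
  show "inj_on (\<lambda>i. kerrel R (pr i)) {..<n}"
  proof (rule inj_onI)
    fix i j assume ij: "i \<in> {..<n}" "j \<in> {..<n}" "kerrel R (pr i) = kerrel R (pr j)"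
    show "i = j"
    proof (rule ccontr)
      assume ne: "i \<noteq> j"
      obtain e where e: "e \<in> carrier R" "pr i e = \<one>\<^bsub>K i\<^esub>" "\<forall>j<n. j \<noteq> i \<longrightarrow> pr j e = \<zero>\<^bsub>K j\<^esub>"
        using idem ij(1) by auto
      interpret hj: ring_hom_ring R "K j" "pr j" using hK ij(2) by simp
      interpret hi: ring_hom_ring R "K i" "pr i" using hK ij(1) by simp
      have "(e, \<zero>\<^bsub>R\<^esub>) \<in> kerrel R (pr j)" using e ne ij(2) by (auto simp: kerrel_def)
      then have "(e, \<zero>\<^bsub>R\<^esub>) \<in> kerrel R (pr i)" using ij(3) by simp
      then have "pr i e = pr i \<zero>\<^bsub>R\<^esub>" by (simp add: kerrel_def)
      then have "\<one>\<^bsub>K i\<^esub> = \<zero>\<^bsub>K i\<^esub>" using e hi.hom_zero by simp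
      then show False using fK[of i] ij(1) by (simp add: domain.one_not_zero field.axioms(1))
    qed
  qed
  show "FP R = (\<lambda>i. kerrel R (pr i)) ` {..<n}"
  proof
    show "(\<lambda>i. kerrel R (pr i)) ` {..<n} \<subseteq> FP R"
      unfolding FP_def using fK K(2) surj by blast
    show "FP R \<subseteq> (\<lambda>i. kerrel R (pr i)) ` {..<n}"
    proof
      fix \<pi> assume "\<pi> \<in> FP R"
      then obtain q and L :: "nat ring" where q: "field L" "q \<in> ring_hom R L" "q ` carrier R = carrier L"
        "\<pi> = kerrel R q" unfolding FP_def by blast
      interpret L: field L by fact
      interpret hq: ring_hom_ring R L q using q(2) R.ring_axioms L.ring_axioms by (simp add: ring_hom_ringI2)
      have ex: "\<exists>i<n. \<forall>a\<in>carrier R. pr i a = \<zero>\<^bsub>K i\<^esub> \<longrightarrow> q a = \<zero>\<^bsub>L\<^esub>"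
      proof (rule ccontr)
        assume "\<not> ?thesis"
        then have bad: "\<forall>i<n. \<exists>a\<in>carrier R. pr i a = \<zero>\<^bsub>K i\<^esub> \<and> q a \<noteq> \<zero>\<^bsub>L\<^esub>" by blast
        have "J \<subseteq> {..<n} \<longrightarrow> (\<exists>y\<in>carrier R. (\<forall>i\<in>J. pr i y = \<zero>\<^bsub>K i\<^esub>) \<and> q y \<noteq> \<zero>\<^bsub>L\<^esub>)"
          if "finite J" for J
          using that
        proof (induction J rule: finite_induct)
          case empty
          then show ?case using L.one_not_zero by (intro impI bexI[of _ "\<one>\<^bsub>R\<^esub>"]) auto
        next
          case (insert i J)
          show ?case
          proof
            assume sub: "insert i J \<subseteq> {..<n}"
            then obtain y where y: "y \<in> carrier R" "\<forall>j\<in>J. pr j y = \<zero>\<^bsub>K j\<^esub>" "q y \<noteq> \<zero>\<^bsub>L\<^esub>"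
              using insert.IH by auto
            obtain a where a: "a \<in> carrier R" "pr i a = \<zero>\<^bsub>K i\<^esub>" "q a \<noteq> \<zero>\<^bsub>L\<^esub>"
              using bad sub by auto
            have "\<forall>j\<in>insert i J. pr j (y \<otimes>\<^bsub>R\<^esub> a) = \<zero>\<^bsub>K j\<^esub>"
            proof
              fix j assume j: "j \<in> insert i J"
              interpret hj: ring_hom_ring R "K j" "pr j" using hK j sub by auto
              have c: "pr j y \<in> carrier (K j)" "pr j a \<in> carrier (K j)" using y(1) a(1) by simp_all
              have rj: "ring (K j)" using rK j sub by auto
              have m: "pr j (y \<otimes>\<^bsub>R\<^esub> a) = pr j y \<otimes>\<^bsub>K j\<^esub> pr j a" using y(1) a(1) by simp
              show "pr j (y \<otimes>\<^bsub>R\<^esub> a) = \<zero>\<^bsub>K j\<^esub>"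
              proof (cases "j = i")
                case True
                then show ?thesis using a y c m ring.ring_simprules(25)[OF rj] by simp
              next
                case False
                then show ?thesis using j a y c m ring.ring_simprules(24)[OF rj] by simp
              qed
            qed
            moreover have "q (y \<otimes>\<^bsub>R\<^esub> a) \<noteq> \<zero>\<^bsub>L\<^esub>"
              using y a L.integral[of "q y" "q a"] ring_hom_closed[OF q(2)] by auto
            ultimately show "\<exists>y\<in>carrier R. (\<forall>i\<in>insert i J. pr i y = \<zero>\<^bsub>K i\<^esub>) \<and> q y \<noteq> \<zero>\<^bsub>L\<^esub>"
              using y a by blast
          qed
        qed
        then obtain y where y: "y \<in> carrier R" "\<forall>i\<in>{..<n}. pr i y = \<zero>\<^bsub>K i\<^esub>" "q y \<noteq> \<zero>\<^bsub>L\<^esub>"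
          by blast
        have "y = \<zero>\<^bsub>R\<^esub>"
        proof (rule decomp_inj[OF B y(1)])
          show "\<zero>\<^bsub>R\<^esub> \<in> carrier R" by simp
          fix i assume i: "i < n"
          interpret hi: ring_hom_ring R "K i" "pr i" using hK i by simp
          show "pr i y = pr i \<zero>\<^bsub>R\<^esub>" using y(2) i by simp
        qed
        then show False using y(3) by simp
      qed
      then obtain i where i: "i < n" "\<forall>a\<in>carrier R. pr i a = \<zero>\<^bsub>K i\<^esub> \<longrightarrow> q a = \<zero>\<^bsub>L\<^esub>" by blast
      interpret Ki: field "K i" using fK i(1) by simp
      interpret hi: ring_hom_ring R "K i" "pr i" using hK i(1) by simp
      have "kerrel R q = kerrel R (pr i)"
      proof -
        have "q a = q b \<longleftrightarrow> pr i a = pr i b" if ab: "a \<in> carrier R" "b \<in> carrier R" for a b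
        proof
          assume e: "pr i a = pr i b"
          have "pr i (a \<ominus>\<^bsub>R\<^esub> b) = \<zero>\<^bsub>K i\<^esub>" using ab e by (simp add: R.minus_eq Ki.minus_eq[symmetric])
          then have "q (a \<ominus>\<^bsub>R\<^esub> b) = \<zero>\<^bsub>L\<^esub>" using i(2) ab by simp
          then have "q a \<ominus>\<^bsub>L\<^esub> q b = \<zero>\<^bsub>L\<^esub>" using ab by (simp add: R.minus_eq L.minus_eq)
          then show "q a = q b" using ab by (simp add: L.r_right_minus_eq)
        next
          assume e: "q a = q b"
          show "pr i a = pr i b"
          proof (rule ccontr)
            assume ne: "pr i a \<noteq> pr i b"
            let ?d = "pr i (a \<ominus>\<^bsub>R\<^esub> b)"
            have d: "?d \<in> carrier (K i)" "?d \<noteq> \<zero>\<^bsub>K i\<^esub>"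
              using ab ne by (simp_all add: R.minus_eq Ki.minus_eq[symmetric] Ki.r_right_minus_eq)
            then have "?d \<in> Units (K i)" using Ki.field_Units by auto
            then have dinv: "inv\<^bsub>K i\<^esub> ?d \<in> carrier (K i)" "inv\<^bsub>K i\<^esub> ?d \<otimes>\<^bsub>K i\<^esub> ?d = \<one>\<^bsub>K i\<^esub>"
              by (simp_all add: Ki.Units_l_inv)
            obtain z where z: "z \<in> carrier R" "pr i z = inv\<^bsub>K i\<^esub> ?d"
              using surj[OF i(1)] dinv(1) by (metis imageE)
            let ?w = "\<one>\<^bsub>R\<^esub> \<ominus>\<^bsub>R\<^esub> z \<otimes>\<^bsub>R\<^esub> (a \<ominus>\<^bsub>R\<^esub> b)"
            have wc: "?w \<in> carrier R" using z ab by simp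
            have "pr i ?w = \<one>\<^bsub>K i\<^esub> \<ominus>\<^bsub>K i\<^esub> (inv\<^bsub>K i\<^esub> ?d \<otimes>\<^bsub>K i\<^esub> ?d)"
              using z ab by (simp add: R.minus_eq Ki.minus_eq)
            also have "\<dots> = \<zero>\<^bsub>K i\<^esub>" using dinv by simp
            finally have "q ?w = \<zero>\<^bsub>L\<^esub>" using i(2) wc by simp
            moreover have "q ?w = \<one>\<^bsub>L\<^esub>"
            proof -
              have qd: "q (a \<ominus>\<^bsub>R\<^esub> b) = \<zero>\<^bsub>L\<^esub>" using ab e by (simp add: R.minus_eq L.minus_eq[symmetric])
              have dc: "a \<ominus>\<^bsub>R\<^esub> b \<in> carrier R" using ab by simp
              have "q (z \<otimes>\<^bsub>R\<^esub> (a \<ominus>\<^bsub>R\<^esub> b)) = \<zero>\<^bsub>L\<^esub>"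
                using z(1) dc qd by simp
              moreover have "q ?w = q \<one>\<^bsub>R\<^esub> \<ominus>\<^bsub>L\<^esub> q (z \<otimes>\<^bsub>R\<^esub> (a \<ominus>\<^bsub>R\<^esub> b))"
                using z(1) dc by (simp add: R.minus_eq L.minus_eq)
              ultimately show ?thesis by (simp add: L.minus_eq)
            qed
            ultimately show False by simp
          qed
        qed
        then show ?thesis unfolding kerrel_def by blast
      qed
      then show "\<pi> \<in> (\<lambda>i. kerrel R (pr i)) ` {..<n}" using q(4) i(1) by blast
    qed
  qed
qed

lemma F_maps:
  assumes "is_functor Xo Xm" "cring R" "cring S" "f \<in> ring_hom R S" "x \<in> Xo R"
  shows "Xm R S f x \<in> Xo S"
  using assms unfolding is_functor_def by blast

lemma F_cong:
  assumes "is_functor Xo Xm" "cring R" "cring S" "f \<in> ring_hom R S" "g \<in> ring_hom R S"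
    "\<And>a. a \<in> carrier R \<Longrightarrow> f a = g a" "x \<in> Xo R"
  shows "Xm R S f x = Xm R S g x"
  using assms unfolding is_functor_def by blast

lemma F_comp:
  assumes "is_functor Xo Xm" "cring R" "cring S" "cring T" "f \<in> ring_hom R S" "g \<in> ring_hom S T" "x \<in> Xo R"
  shows "Xm R T (g \<circ> f) x = Xm S T g (Xm R S f x)"
  using assms unfolding is_functor_def by blast

lemma PP0:
  assumes "preserves_products Xo Xm" "cring T" "card (carrier T) = 1"
  shows "\<exists>y. Xo T = {y}"
  using assms unfolding preserves_products_def by blast

lemma PP2:
  assumes "preserves_products Xo Xm" "cring R" "cring R1" "cring R2"
    "p1 \<in> ring_hom R R1" "p2 \<in> ring_hom R R2"
    "bij_betw (\<lambda>x. (p1 x, p2 x)) (carrier R) (carrier R1 \<times> carrier R2)"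
  shows "bij_betw (\<lambda>x. (Xm R R1 p1 x, Xm R R2 p2 x)) (Xo R) (Xo R1 \<times> Xo R2)"
  using assms unfolding preserves_products_def by blast

definition enc_fun :: "nat \<Rightarrow> (nat \<Rightarrow> nat) \<Rightarrow> nat" where
  "enc_fun n f = list_encode (map f [0..<n])"

lemma enc_fun_inj: "inj_on (enc_fun n) (PiE {..<n} B)"
proof (rule inj_onI)
  fix f g assume fg: "f \<in> PiE {..<n} B" "g \<in> PiE {..<n} B" "enc_fun n f = enc_fun n g"
  then have "map f [0..<n] = map g [0..<n]" unfolding enc_fun_def by (simp add: list_encode_eq)
  then have "\<forall>i<n. f i = g i" by (simp add: map_eq_conv)
  then show "f = g" using fg(1,2) by (intro extensionalityI[of _ "{..<n}"]) (auto simp: PiE_def)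
qed

lemma prod_pres:
  fixes Xo :: "nat ring \<Rightarrow> 'x set" and n :: nat and R :: "nat ring" and K :: "nat \<Rightarrow> nat ring"
  assumes F: "is_functor Xo Xm" and PP: "preserves_products Xo Xm"
  shows "cring R \<Longrightarrow> (\<And>i. i < n \<Longrightarrow> cring (K i) \<and> pr i \<in> ring_hom R (K i)) \<Longrightarrow>
    bij_betw (\<lambda>x. \<lambda>i\<in>{..<n}. pr i x) (carrier R) (PiE {..<n} (\<lambda>i. carrier (K i))) \<Longrightarrow>
    bij_betw (\<lambda>y. \<lambda>i\<in>{..<n}. Xm R (K i) (pr i) y) (Xo R) (PiE {..<n} (\<lambda>i. Xo (K i)))"
proof (induction n arbitrary: R K pr)
  case 0
  have "card (carrier R) = card (PiE {..<0::nat} (\<lambda>i. carrier (K i)))"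
    using 0(3) by (rule bij_betw_same_card)
  then have "card (carrier R) = 1" by simp
  then obtain y where y: "Xo R = {y}" using PP0[OF PP 0(1)] by blast
  show ?case unfolding y by (simp add: bij_betw_def)
next
  case (Suc n)
  note cR = Suc.prems(1) and hK = Suc.prems(2) and B = Suc.prems(3)
  interpret R: cring R by fact
  define K' where "K' = (\<lambda>j. K (Suc j))"
  define T where "T = prodR n K'"
  have cK': "cring (K' j)" if "j < n" for j using hK that unfolding K'_def by simp
  have cT: "cring T" unfolding T_def by (rule prodR_cring) (rule cK')
  have rT: "ring T" using cT cring.axioms(1) by blast
  have injE: "inj_on (enc_fun n) (carrier T)" unfolding T_def prodR_def by (simp add: enc_fun_inj)
  define R2 where "R2 = transp' (enc_fun n) T"
  have cR2: "cring R2" unfolding R2_def by (rule transp'_cring[OF injE cT])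
  have encH: "enc_fun n \<in> ring_hom T R2" using transp'_hom[OF injE rT] unfolding R2_def ring_iso_def by blast
  have decH: "inv_into (carrier T) (enc_fun n) \<in> ring_hom R2 T"
    unfolding R2_def by (rule transp'_inv_hom[OF injE rT])
  define tup where "tup = (\<lambda>x. \<lambda>j\<in>{..<n}. pr (Suc j) x)"
  have tupH: "tup \<in> ring_hom R T"
  proof (rule ring_hom_memI)
    fix x y assume xy: "x \<in> carrier R" "y \<in> carrier R"
    show "tup x \<in> carrier T" using xy ring_hom_closed hK unfolding tup_def T_def prodR_def K'_def by fastforce
    show "tup (x \<otimes>\<^bsub>R\<^esub> y) = tup x \<otimes>\<^bsub>T\<^esub> tup y"
      using xy hK unfolding tup_def T_def prodR_def K'_def by (auto simp: ring_hom_mult)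
    show "tup (x \<oplus>\<^bsub>R\<^esub> y) = tup x \<oplus>\<^bsub>T\<^esub> tup y"
      using xy hK unfolding tup_def T_def prodR_def K'_def by (auto simp: ring_hom_add)
  next
    show "tup \<one>\<^bsub>R\<^esub> = \<one>\<^bsub>T\<^esub>"
      using hK unfolding tup_def T_def prodR_def K'_def by (auto simp: ring_hom_one)
  qed
  define q where "q = enc_fun n \<circ> tup"
  have qH: "q \<in> ring_hom R R2" unfolding q_def by (rule ring_hom_trans[OF tupH encH])
  define p' where "p' = (\<lambda>j c. inv_into (carrier T) (enc_fun n) c j)"
  have p'H: "p' j \<in> ring_hom R2 (K' j)" if "j < n" for j
  proof -
    have "(\<lambda>f. f j) \<circ> inv_into (carrier T) (enc_fun n) \<in> ring_hom R2 (K' j)"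
      using ring_hom_trans[OF decH prodR_proj[OF that, of K', folded T_def]] .
    then show ?thesis unfolding p'_def comp_def .
  qed
  have cR2carr: "carrier R2 = enc_fun n ` carrier T" unfolding R2_def by (simp add: transp'_def)
  have tupC: "tup x \<in> carrier T" if "x \<in> carrier R" for x using ring_hom_closed[OF tupH that] .
  have p'q: "p' j (q x) = pr (Suc j) x" if "x \<in> carrier R" "j < n" for x j
    using that tupC[OF that(1)] injE unfolding p'_def q_def tup_def by (simp add: inv_into_f_f)
  have B2: "bij_betw (\<lambda>x. (pr 0 x, q x)) (carrier R) (carrier (K 0) \<times> carrier R2)"
    unfolding bij_betw_def
  proof (intro conjI)
    show "inj_on (\<lambda>x. (pr 0 x, q x)) (carrier R)"
    proof (rule inj_onI)
      fix x y assume xy: "x \<in> carrier R" "y \<in> carrier R" "(pr 0 x, q x) = (pr 0 y, q y)"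
      then have "tup x = tup y" using injE tupC unfolding q_def inj_on_def by auto
      then have "pr (Suc j) x = pr (Suc j) y" if "j < n" for j
        using that unfolding tup_def by (metis restrict_apply' lessThan_iff)
      then have "pr i x = pr i y" if "i < Suc n" for i using xy(3) that
        by (cases i) auto
      then show "x = y" by (rule decomp_inj[OF B xy(1,2)])
    qed
    show "(\<lambda>x. (pr 0 x, q x)) ` carrier R = carrier (K 0) \<times> carrier R2"
    proof
      show "(\<lambda>x. (pr 0 x, q x)) ` carrier R \<subseteq> carrier (K 0) \<times> carrier R2"
        using ring_hom_closed[OF qH] ring_hom_closed[OF conjunct2[OF hK[of 0]]] by auto
      show "carrier (K 0) \<times> carrier R2 \<subseteq> (\<lambda>x. (pr 0 x, q x)) ` carrier R"
      proof
        fix kc assume "kc \<in> carrier (K 0) \<times> carrier R2"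
        then obtain k c where kc: "kc = (k, c)" "k \<in> carrier (K 0)" "c \<in> carrier R2" by auto
        then obtain f where f: "f \<in> carrier T" "c = enc_fun n f" unfolding cR2carr by auto
        have kf: "kc = (k, enc_fun n f)" "k \<in> carrier (K 0)" "f \<in> carrier T" using kc f by auto
        define g where "g = (\<lambda>i\<in>{..<Suc n}. if i = 0 then k else f (i - 1))"
        have "g \<in> PiE {..<Suc n} (\<lambda>i. carrier (K i))"
          using kf(2,3) unfolding g_def T_def prodR_def K'_def
          by (auto simp: PiE_def Pi_def) (metis Suc_pred less_Suc_eq_0_disj not_less_eq)
        then obtain x where x: "x \<in> carrier R" "\<forall>i<Suc n. pr i x = g i"
          using decomp_surj[OF B] by blast
        have "tup x = f"
        proof (rule extensionalityI[of _ "{..<n}"])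
          show "tup x \<in> extensional {..<n}" unfolding tup_def by simp
          show "f \<in> extensional {..<n}" using kf(3) unfolding T_def prodR_def by (simp add: PiE_def)
          fix j assume "j \<in> {..<n}"
          then show "tup x j = f j" using x(2) unfolding tup_def g_def by auto
        qed
        then show "kc \<in> (\<lambda>x. (pr 0 x, q x)) ` carrier R"
          using x kf(1) unfolding q_def g_def by (auto intro!: image_eqI[of _ _ x])
      qed
    qed
  qed
  have cK0: "cring (K 0)" using hK by simp
  have X2: "bij_betw (\<lambda>y. (Xm R (K 0) (pr 0) y, Xm R R2 q y)) (Xo R) (Xo (K 0) \<times> Xo R2)"
    by (rule PP2[OF PP cR cK0 cR2 _ qH B2]) (use hK in simp)
  have BR2: "bij_betw (\<lambda>c. \<lambda>j\<in>{..<n}. p' j c) (carrier R2) (PiE {..<n} (\<lambda>j. carrier (K' j)))"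
  proof -
    have "bij_betw (inv_into (carrier T) (enc_fun n)) (carrier R2) (carrier T)"
      unfolding cR2carr by (rule bij_betw_inv_into) (simp add: bij_betw_def injE)
    moreover have "inv_into (carrier T) (enc_fun n) c = (\<lambda>j\<in>{..<n}. p' j c)" if "c \<in> carrier R2" for c
    proof -
      have "inv_into (carrier T) (enc_fun n) c \<in> carrier T"
        using that unfolding cR2carr by (simp add: inv_into_into)
      then have "inv_into (carrier T) (enc_fun n) c \<in> PiE {..<n} (\<lambda>j. carrier (K' j))"
        unfolding T_def prodR_def by simp
      then have "restrict (inv_into (carrier T) (enc_fun n) c) {..<n} = inv_into (carrier T) (enc_fun n) c"
        by (rule PiE_restrict)
      then show ?thesis unfolding p'_def by simp
    qed
    ultimately have "bij_betw (\<lambda>c. \<lambda>j\<in>{..<n}. p' j c) (carrier R2) (carrier T)"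
      using bij_betw_cong[of "carrier R2" "inv_into (carrier T) (enc_fun n)" "\<lambda>c. \<lambda>j\<in>{..<n}. p' j c"] by simp
    then show ?thesis unfolding T_def prodR_def by simp
  qed
  have IH: "bij_betw (\<lambda>z. \<lambda>j\<in>{..<n}. Xm R2 (K' j) (p' j) z) (Xo R2) (PiE {..<n} (\<lambda>j. Xo (K' j)))"
  proof (rule Suc.IH[OF cR2 _ BR2])
    fix j assume "j < n"
    then show "cring (K' j) \<and> p' j \<in> ring_hom R2 (K' j)" using cK' p'H by blast
  qed
  have compo: "Xm R (K (Suc j)) (pr (Suc j)) y = Xm R2 (K' j) (p' j) (Xm R R2 q y)"
    if "y \<in> Xo R" "j < n" for y j
  proof -
    have "Xm R (K' j) (pr (Suc j)) y = Xm R (K' j) (p' j \<circ> q) y"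
    proof (rule F_cong[OF F cR cK'[OF that(2)] _ ring_hom_trans[OF qH p'H[OF that(2)]] _ that(1)])
      show "pr (Suc j) \<in> ring_hom R (K' j)" using hK[of "Suc j"] that(2) unfolding K'_def by simp
      fix a assume "a \<in> carrier R"
      then show "pr (Suc j) a = (p' j \<circ> q) a" using p'q[of a j] that(2) by simp
    qed
    also have "\<dots> = Xm R2 (K' j) (p' j) (Xm R R2 q y)"
      by (rule F_comp[OF F cR cR2 cK'[OF that(2)] qH p'H[OF that(2)] that(1)])
    finally show ?thesis unfolding K'_def .
  qed
  have mapsK: "Xm R (K i) (pr i) y \<in> Xo (K i)" if "y \<in> Xo R" "i < Suc n" for y i
  proof -
    have "cring (K i)" "pr i \<in> ring_hom R (K i)" using hK[of i] that(2) by auto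
    then show ?thesis using F_maps[OF F cR _ _ that(1)] by blast
  qed
  show ?case
    unfolding bij_betw_def
  proof (intro conjI)
    show "inj_on (\<lambda>y. \<lambda>i\<in>{..<Suc n}. Xm R (K i) (pr i) y) (Xo R)"
    proof (rule inj_onI)
      fix y y' assume yy: "y \<in> Xo R" "y' \<in> Xo R"
        "(\<lambda>i\<in>{..<Suc n}. Xm R (K i) (pr i) y) = (\<lambda>i\<in>{..<Suc n}. Xm R (K i) (pr i) y')"
      then have eq: "Xm R (K i) (pr i) y = Xm R (K i) (pr i) y'" if "i < Suc n" for i
      proof -
        have "i \<in> {..<Suc n}" using that by simp
        then show ?thesis using fun_cong[OF yy(3), of i] by (simp only: restrict_apply')
      qed
      have "(\<lambda>j\<in>{..<n}. Xm R2 (K' j) (p' j) (Xm R R2 q y)) = (\<lambda>j\<in>{..<n}. Xm R2 (K' j) (p' j) (Xm R R2 q y'))"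
      proof (intro restrict_ext)
        fix j assume "j \<in> {..<n}"
        then show "Xm R2 (K' j) (p' j) (Xm R R2 q y) = Xm R2 (K' j) (p' j) (Xm R R2 q y')"
          using compo[OF yy(1)] compo[OF yy(2)] eq[of "Suc j"] by simp
      qed
      moreover have "Xm R R2 q y \<in> Xo R2" "Xm R R2 q y' \<in> Xo R2"
        using F_maps[OF F cR cR2 qH] yy(1,2) by auto
      ultimately have "Xm R R2 q y = Xm R R2 q y'" using IH unfolding bij_betw_def inj_on_def by blast
      then have "(Xm R (K 0) (pr 0) y, Xm R R2 q y) = (Xm R (K 0) (pr 0) y', Xm R R2 q y')"
        using eq[of 0] by simp
      then show "y = y'" using X2 yy(1,2) unfolding bij_betw_def inj_on_def by blast
    qed
    show "(\<lambda>y. \<lambda>i\<in>{..<Suc n}. Xm R (K i) (pr i) y) ` Xo R = PiE {..<Suc n} (\<lambda>i. Xo (K i))"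
    proof
      show "(\<lambda>y. \<lambda>i\<in>{..<Suc n}. Xm R (K i) (pr i) y) ` Xo R \<subseteq> PiE {..<Suc n} (\<lambda>i. Xo (K i))"
      proof (rule image_subsetI)
        fix y assume y: "y \<in> Xo R"
        show "(\<lambda>i\<in>{..<Suc n}. Xm R (K i) (pr i) y) \<in> PiE {..<Suc n} (\<lambda>i. Xo (K i))"
          unfolding restrict_PiE_iff using mapsK[OF y] by simp
      qed
      show "PiE {..<Suc n} (\<lambda>i. Xo (K i)) \<subseteq> (\<lambda>y. \<lambda>i\<in>{..<Suc n}. Xm R (K i) (pr i) y) ` Xo R"
      proof
        fix g assume g: "g \<in> PiE {..<Suc n} (\<lambda>i. Xo (K i))"
        have "(\<lambda>j\<in>{..<n}. g (Suc j)) \<in> PiE {..<n} (\<lambda>j. Xo (K' j))"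
          using g unfolding K'_def by auto
        then have "(\<lambda>j\<in>{..<n}. g (Suc j)) \<in> (\<lambda>z. \<lambda>j\<in>{..<n}. Xm R2 (K' j) (p' j) z) ` Xo R2"
          using IH by (simp add: bij_betw_def)
        then obtain z where z: "z \<in> Xo R2" "(\<lambda>j\<in>{..<n}. Xm R2 (K' j) (p' j) z) = (\<lambda>j\<in>{..<n}. g (Suc j))"
          by auto
        have "(g 0, z) \<in> Xo (K 0) \<times> Xo R2" using g z(1) by auto
        then have "(g 0, z) \<in> (\<lambda>y. (Xm R (K 0) (pr 0) y, Xm R R2 q y)) ` Xo R"
          using X2 by (simp add: bij_betw_def)
        then obtain y where y: "y \<in> Xo R" "(Xm R (K 0) (pr 0) y, Xm R R2 q y) = (g 0, z)"
          by auto
        have "(\<lambda>i\<in>{..<Suc n}. Xm R (K i) (pr i) y) = g"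
        proof (rule extensionalityI[of _ "{..<Suc n}"])
          show "g \<in> extensional {..<Suc n}" using g by (simp add: PiE_def)
          fix i assume i: "i \<in> {..<Suc n}"
          show "(\<lambda>i\<in>{..<Suc n}. Xm R (K i) (pr i) y) i = g i"
          proof (cases i)
            case 0
            then show ?thesis using y(2) by simp
          next
            case (Suc j)
            then have j: "j < n" using i by simp
            have "Xm R2 (K' j) (p' j) z = g (Suc j)" using fun_cong[OF z(2), of j] j by simp
            then show ?thesis using compo[OF y(1) j] y(2) Suc i by simp
          qed
        qed simp
        then show "g \<in> (\<lambda>y. \<lambda>i\<in>{..<Suc n}. Xm R (K i) (pr i) y) ` Xo R" using y(1) by blast
      qed
    qed
  qed
qed

lemma Sn_orbit_self: "xs \<in> Sn_orbit xs"
  unfolding Sn_orbit_def by (rule CollectI, rule exI[of _ id]) (simp add: permutes_id)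

lemma Sn_orbit_permute:
  assumes t: "t permutes {..<length xs}"
  shows "Sn_orbit (permute_list t xs) = Sn_orbit xs"
proof
  show "Sn_orbit (permute_list t xs) \<subseteq> Sn_orbit xs"
  proof
    fix ys assume "ys \<in> Sn_orbit (permute_list t xs)"
    then obtain s where s: "s permutes {..<length xs}" "ys = permute_list s (permute_list t xs)"
      unfolding Sn_orbit_def by auto
    have "ys = permute_list (t \<circ> s) xs" using s permute_list_compose[of s xs t] by simp
    moreover have "t \<circ> s permutes {..<length xs}" using permutes_compose[OF s(1) t] .
    ultimately show "ys \<in> Sn_orbit xs" unfolding Sn_orbit_def by blast
  qed
  show "Sn_orbit xs \<subseteq> Sn_orbit (permute_list t xs)"
  proof
    fix ys assume "ys \<in> Sn_orbit xs"
    then obtain s where s: "s permutes {..<length xs}" "ys = permute_list s xs"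
      unfolding Sn_orbit_def by auto
    have u: "inv_into UNIV t \<circ> s permutes {..<length xs}" using permutes_compose[OF s(1) permutes_inv[OF t]] .
    have "permute_list (inv_into UNIV t \<circ> s) (permute_list t xs) = permute_list (t \<circ> (inv_into UNIV t \<circ> s)) xs"
      using permute_list_compose[OF u, of t] by simp
    also have "t \<circ> (inv_into UNIV t \<circ> s) = s" using permutes_inverses(1)[OF t] by (auto simp: fun_eq_iff)
    finally have "ys = permute_list (inv_into UNIV t \<circ> s) (permute_list t xs)" using s by (simp add: comp_def)
    then show "ys \<in> Sn_orbit (permute_list t xs)" using u unfolding Sn_orbit_def by auto
  qed
qed

lemma Sn_orbit_mset:
  assumes "mset xs = mset ys"
  shows "Sn_orbit xs = Sn_orbit ys"
proof -
  obtain p where p: "p permutes {..<length ys}" "permute_list p ys = xs"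
    using mset_eq_permutation[OF assms] by blast
  show ?thesis using Sn_orbit_permute[OF p(1)] p(2) by simp
qed

lemma Sn_orbit_map: "map g ` Sn_orbit xs = Sn_orbit (map g xs)"
proof
  show "map g ` Sn_orbit xs \<subseteq> Sn_orbit (map g xs)"
  proof
    fix ys assume "ys \<in> map g ` Sn_orbit xs"
    then obtain t where t: "t permutes {..<length xs}" "ys = map g (permute_list t xs)"
      unfolding Sn_orbit_def by auto
    then have "ys = permute_list t (map g xs)" by (simp add: permute_list_map)
    then show "ys \<in> Sn_orbit (map g xs)" using t(1) unfolding Sn_orbit_def by auto
  qed
  show "Sn_orbit (map g xs) \<subseteq> map g ` Sn_orbit xs"
  proof
    fix ys assume "ys \<in> Sn_orbit (map g xs)"
    then obtain t where t: "t permutes {..<length xs}" "ys = permute_list t (map g xs)"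
      unfolding Sn_orbit_def by auto
    then have "ys = map g (permute_list t xs)" by (simp add: permute_list_map)
    moreover have "permute_list t xs \<in> Sn_orbit xs" using t(1) unfolding Sn_orbit_def by auto
    ultimately show "ys \<in> map g ` Sn_orbit xs" by blast
  qed
qed

lemma permute_fix_distinct:
  assumes "distinct xs" "t permutes {..<length xs}" "permute_list t xs = xs" "length ys = length xs"
  shows "permute_list t ys = ys"
proof (rule nth_equalityI)
  show "length (permute_list t ys) = length ys" by simp
  fix i assume i: "i < length (permute_list t ys)"
  then have i': "i < length xs" using assms(4) by simp
  have "xs ! t i = xs ! i" using permute_list_nth[OF assms(2) i'] assms(3) by simp
  moreover have "t i < length xs" using permutes_in_image[OF assms(2)] i' by simp
  ultimately have "t i = i" using assms(1) i' by (simp add: nth_eq_iff_index_eq)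
  then show "permute_list t ys ! i = ys ! i" using permute_list_nth[of t ys i] assms(2,4) i' by simp
qed

lemma in_Sn_orbit_eq: "Sn_orbit xs = Sn_orbit ys \<Longrightarrow> \<exists>t. t permutes {..<length ys} \<and> xs = permute_list t ys"
  using Sn_orbit_self[of xs] unfolding Sn_orbit_def by auto

lemma listset_PiE_bij:
  assumes fin: "finite S" and sub: "\<And>\<pi>. \<pi> \<in> set L \<Longrightarrow> \<pi> \<subseteq> S \<times> S"
  shows "bij_betw (\<lambda>xs. \<lambda>j\<in>{..<length L}. set_encode (xs ! j)) (listset (map (\<lambda>\<pi>. S // \<pi>) L))
           (PiE {..<length L} (\<lambda>j. enc_classes S (L ! j)))"
proof -
  have finq: "finite Z" if "j < length L" "Z \<in> S // (L ! j)" for j Z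
    using that sub[of "L ! j"] fin unfolding quotient_def by (auto intro: finite_subset)
  show ?thesis
    unfolding bij_betw_def
  proof (intro conjI)
    show "inj_on (\<lambda>xs. \<lambda>j\<in>{..<length L}. set_encode (xs ! j)) (listset (map (\<lambda>\<pi>. S // \<pi>) L))"
    proof (rule inj_onI)
      fix xs ys assume xs: "xs \<in> listset (map (\<lambda>\<pi>. S // \<pi>) L)" and ys: "ys \<in> listset (map (\<lambda>\<pi>. S // \<pi>) L)"
        and eq: "(\<lambda>j\<in>{..<length L}. set_encode (xs ! j)) = (\<lambda>j\<in>{..<length L}. set_encode (ys ! j))"
      have lx: "length xs = length L" "\<forall>i<length L. xs ! i \<in> S // (L ! i)" using xs in_listset_iff[of xs "map (\<lambda>\<pi>. S // \<pi>) L"] by auto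
      have ly: "length ys = length L" "\<forall>i<length L. ys ! i \<in> S // (L ! i)" using ys in_listset_iff[of ys "map (\<lambda>\<pi>. S // \<pi>) L"] by auto
      show "xs = ys"
      proof (rule nth_equalityI)
        show "length xs = length ys" using lx ly by simp
        fix i assume i: "i < length xs"
        then have i': "i \<in> {..<length L}" using lx by simp
        have "set_encode (xs ! i) = set_encode (ys ! i)" using fun_cong[OF eq, of i] i' by (simp only: restrict_apply')
        then show "xs ! i = ys ! i" using finq lx ly i' by (simp add: set_encode_eq)
      qed
    qed
    show "(\<lambda>xs. \<lambda>j\<in>{..<length L}. set_encode (xs ! j)) ` listset (map (\<lambda>\<pi>. S // \<pi>) L) =
        PiE {..<length L} (\<lambda>j. enc_classes S (L ! j))"
    proof
      show "(\<lambda>xs. \<lambda>j\<in>{..<length L}. set_encode (xs ! j)) ` listset (map (\<lambda>\<pi>. S // \<pi>) L) \<subseteq>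
          PiE {..<length L} (\<lambda>j. enc_classes S (L ! j))"
      proof (rule image_subsetI)
        fix xs assume "xs \<in> listset (map (\<lambda>\<pi>. S // \<pi>) L)"
        then show "(\<lambda>j\<in>{..<length L}. set_encode (xs ! j)) \<in> PiE {..<length L} (\<lambda>j. enc_classes S (L ! j))"
          unfolding restrict_PiE_iff by (auto simp: in_listset_iff enc_classes_def)
      qed
      show "PiE {..<length L} (\<lambda>j. enc_classes S (L ! j)) \<subseteq>
          (\<lambda>xs. \<lambda>j\<in>{..<length L}. set_encode (xs ! j)) ` listset (map (\<lambda>\<pi>. S // \<pi>) L)"
      proof
        fix f assume f: "f \<in> PiE {..<length L} (\<lambda>j. enc_classes S (L ! j))"
        define xs where "xs = map (\<lambda>j. set_decode (f j)) [0..<length L]"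
        have fj: "set_decode (f j) \<in> S // (L ! j)" if "j < length L" for j
        proof -
          have "f j \<in> set_encode ` (S // (L ! j))" using f that by (auto simp: enc_classes_def)
          then obtain Z where "Z \<in> S // (L ! j)" "f j = set_encode Z" by auto
          then show ?thesis using finq[OF that] by simp
        qed
        have "xs \<in> listset (map (\<lambda>\<pi>. S // \<pi>) L)" unfolding in_listset_iff xs_def using fj by simp
        moreover have "(\<lambda>j\<in>{..<length L}. set_encode (xs ! j)) = f"
        proof (rule extensionalityI[of _ "{..<length L}"])
          show "f \<in> extensional {..<length L}" using f by (simp add: PiE_def)
          fix j assume "j \<in> {..<length L}"
          then show "(\<lambda>j\<in>{..<length L}. set_encode (xs ! j)) j = f j" unfolding xs_def by simp
        qed simp
        ultimately show "f \<in> (\<lambda>xs. \<lambda>j\<in>{..<length L}. set_encode (xs ! j)) ` listset (map (\<lambda>\<pi>. S // \<pi>) L)"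
          by (metis image_eqI)
      qed
    qed
  qed
qed

lemma listset_qmap_bij:
  assumes fin: "finite S" and sub: "\<And>\<pi>. \<pi> \<in> set L \<Longrightarrow> \<pi> \<subseteq> S \<times> S"
  shows "bij_betw (\<lambda>a. map (\<lambda>\<pi>. \<pi> `` {a}) L) S (listset (map (\<lambda>\<pi>. S // \<pi>) L)) \<longleftrightarrow>
    bij_betw (\<lambda>a. \<lambda>j\<in>{..<length L}. qmap (L ! j) a) S (PiE {..<length L} (\<lambda>j. enc_classes S (L ! j)))"
proof -
  note B = listset_PiE_bij[OF fin sub]
  have img: "(\<lambda>a. map (\<lambda>\<pi>. \<pi> `` {a}) L) ` S \<subseteq> listset (map (\<lambda>\<pi>. S // \<pi>) L)"
    by (auto simp: in_listset_iff quotientI)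
  have "bij_betw (\<lambda>a. map (\<lambda>\<pi>. \<pi> `` {a}) L) S (listset (map (\<lambda>\<pi>. S // \<pi>) L)) \<longleftrightarrow>
    bij_betw ((\<lambda>xs. \<lambda>j\<in>{..<length L}. set_encode (xs ! j)) \<circ> (\<lambda>a. map (\<lambda>\<pi>. \<pi> `` {a}) L)) S
      (PiE {..<length L} (\<lambda>j. enc_classes S (L ! j)))"
    by (rule bij_betw_comp_iff2[OF B img])
  also have "(\<lambda>xs. \<lambda>j\<in>{..<length L}. set_encode (xs ! j)) \<circ> (\<lambda>a. map (\<lambda>\<pi>. \<pi> `` {a}) L) =
     (\<lambda>a. \<lambda>j\<in>{..<length L}. qmap (L ! j) a)"
    by (auto simp: fun_eq_iff qmap_def)
  finally show ?thesis .
qed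

definition enumFP :: "nat ring \<Rightarrow> (nat \<times> nat) set list" where
  "enumFP R = (SOME L. distinct L \<and> set L = FP R)"

lemma enumFP:
  assumes "finite (FP R)"
  shows "distinct (enumFP R)" "set (enumFP R) = FP R"
proof -
  have "\<exists>L. distinct L \<and> set L = FP R" using finite_distinct_list[OF assms] by metis
  then have "distinct (enumFP R) \<and> set (enumFP R) = FP R" unfolding enumFP_def by (rule someI_ex)
  then show "distinct (enumFP R)" "set (enumFP R) = FP R" by auto
qed

lemma dec_facts:
  fixes R :: "nat ring" and K :: "nat \<Rightarrow> nat ring"
  assumes cR: "cring R" and fin: "finite (carrier R)"
    and K: "\<And>i. i < n \<Longrightarrow> field (K i)" "\<And>i. i < n \<Longrightarrow> pr i \<in> ring_hom R (K i)"
    and B: "bij_betw (\<lambda>x. \<lambda>i\<in>{..<n}. pr i x) (carrier R) (PiE {..<n} (\<lambda>i. carrier (K i)))"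
    and \<pi>: "\<pi> \<in> FP R"
  shows "\<exists>i<n. \<pi> = kerrel R (pr i) \<and> field (qring R \<pi>) \<and> cring (qring R \<pi>) \<and>
      qmap \<pi> \<in> ring_hom R (qring R \<pi>) \<and> algchar (qring R \<pi>) = algchar (K i) \<and>
      ring_on (enc_classes (carrier R) \<pi>) (qring R \<pi>) \<and> equiv (carrier R) \<pi> \<and>
      carrier (qring R \<pi>) = enc_classes (carrier R) \<pi> \<and> qmap \<pi> ` carrier R = enc_classes (carrier R) \<pi>"
proof -
  have D3: "FP R = (\<lambda>i. kerrel R (pr i)) ` {..<n}" by (rule decomp_FP(3)[OF cR]) (use K B in auto)
  obtain i where i: "i < n" "\<pi> = kerrel R (pr i)" using \<pi> D3 by auto
  have D1: "pr i ` carrier R = carrier (K i)" by (rule decomp_FP(1)[OF cR _ _ _ i(1)]) (use K B in auto)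
  note Q = quot_facts[OF cR K(1)[OF i(1)] K(2)[OF i(1)] D1 fin, folded i(2)]
  show ?thesis using i Q by blast
qed

lemma dec_bij:
  fixes R :: "nat ring" and K :: "nat \<Rightarrow> nat ring"
  assumes cR: "cring R" and fin: "finite (carrier R)"
    and K: "\<And>i. i < n \<Longrightarrow> field (K i)" "\<And>i. i < n \<Longrightarrow> pr i \<in> ring_hom R (K i)"
    and B: "bij_betw (\<lambda>x. \<lambda>i\<in>{..<n}. pr i x) (carrier R) (PiE {..<n} (\<lambda>i. carrier (K i)))"
    and L: "distinct L" "set L = FP R"
  shows "bij_betw (\<lambda>a. \<lambda>j\<in>{..<length L}. qmap (L ! j) a) (carrier R)
           (PiE {..<length L} (\<lambda>j. enc_classes (carrier R) (L ! j)))"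
proof -
  have D3: "FP R = (\<lambda>i. kerrel R (pr i)) ` {..<n}" by (rule decomp_FP(3)[OF cR]) (use K B in auto)
  have ex: "\<forall>i<n. \<exists>j<length L. L ! j = kerrel R (pr i)"
  proof (intro allI impI)
    fix i assume "i < n"
    then have "kerrel R (pr i) \<in> set L" using L(2) D3 by auto
    then show "\<exists>j<length L. L ! j = kerrel R (pr i)" by (simp add: in_set_conv_nth)
  qed
  then obtain J where J: "\<And>i. i < n \<Longrightarrow> J i < length L \<and> L ! J i = kerrel R (pr i)" by metis
  have inv: "\<exists>i<n. L ! j = kerrel R (pr i)" if "j < length L" for j
  proof -
    have "L ! j \<in> FP R" using that L(2) nth_mem by blast
    then show ?thesis using D3 by auto
  qed
  show ?thesis
    unfolding bij_betw_def
  proof (intro conjI)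
    show "inj_on (\<lambda>a. \<lambda>j\<in>{..<length L}. qmap (L ! j) a) (carrier R)"
    proof (rule inj_onI)
      fix a b assume ab: "a \<in> carrier R" "b \<in> carrier R"
        and eq: "(\<lambda>j\<in>{..<length L}. qmap (L ! j) a) = (\<lambda>j\<in>{..<length L}. qmap (L ! j) b)"
      show "a = b"
      proof (rule decomp_inj[OF B ab])
        fix i assume i: "i < n"
        have "J i \<in> {..<length L}" using J[OF i] by simp
        then have "qmap (L ! J i) a = qmap (L ! J i) b" using fun_cong[OF eq, of "J i"] by (simp only: restrict_apply')
        then have "qmap (kerrel R (pr i)) a = qmap (kerrel R (pr i)) b" using J[OF i] by simp
        then show "pr i a = pr i b" using qmap_kerrel[OF fin ab, of "pr i"] by simp
      qed
    qed
    show "(\<lambda>a. \<lambda>j\<in>{..<length L}. qmap (L ! j) a) ` carrier R = PiE {..<length L} (\<lambda>j. enc_classes (carrier R) (L ! j))"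
    proof
      show "(\<lambda>a. \<lambda>j\<in>{..<length L}. qmap (L ! j) a) ` carrier R \<subseteq> PiE {..<length L} (\<lambda>j. enc_classes (carrier R) (L ! j))"
      proof (rule image_subsetI)
        fix a assume "a \<in> carrier R"
        then show "(\<lambda>j\<in>{..<length L}. qmap (L ! j) a) \<in> PiE {..<length L} (\<lambda>j. enc_classes (carrier R) (L ! j))"
          unfolding restrict_PiE_iff enc_classes_qmap by simp
      qed
      show "PiE {..<length L} (\<lambda>j. enc_classes (carrier R) (L ! j)) \<subseteq> (\<lambda>a. \<lambda>j\<in>{..<length L}. qmap (L ! j) a) ` carrier R"
      proof
        fix g assume g: "g \<in> PiE {..<length L} (\<lambda>j. enc_classes (carrier R) (L ! j))"
        have "\<forall>i<n. \<exists>a\<in>carrier R. qmap (L ! J i) a = g (J i)"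
        proof (intro allI impI)
          fix i assume i: "i < n"
          have "J i \<in> {..<length L}" using J[OF i] by simp
          then have "g (J i) \<in> enc_classes (carrier R) (L ! J i)" by (rule PiE_mem[OF g])
          then have "g (J i) \<in> qmap (L ! J i) ` carrier R" by (simp only: enc_classes_qmap)
          then show "\<exists>a\<in>carrier R. qmap (L ! J i) a = g (J i)" by auto
        qed
        then obtain A where A: "\<And>i. i < n \<Longrightarrow> A i \<in> carrier R \<and> qmap (L ! J i) (A i) = g (J i)" by metis
        have "(\<lambda>i\<in>{..<n}. pr i (A i)) \<in> PiE {..<n} (\<lambda>i. carrier (K i))"
          unfolding restrict_PiE_iff using A ring_hom_closed[OF K(2)] by simp
        then obtain y where y: "y \<in> carrier R" "\<forall>i<n. pr i y = (\<lambda>i\<in>{..<n}. pr i (A i)) i"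
          using decomp_surj[OF B] by blast
        have "(\<lambda>j\<in>{..<length L}. qmap (L ! j) y) = g"
        proof (rule extensionalityI[of _ "{..<length L}"])
          show "g \<in> extensional {..<length L}" using g by (simp add: PiE_def)
          fix j assume j: "j \<in> {..<length L}"
          obtain i where i: "i < n" "L ! j = kerrel R (pr i)" using inv j by auto
          have "J i = j" using nth_eq_iff_index_eq[OF L(1), of "J i" j] J[OF i(1)] i(2) j by simp
          have "pr i y = pr i (A i)" using y(2) i(1) by simp
          then have "qmap (L ! j) y = qmap (L ! j) (A i)" using i(2) qmap_kerrel[OF fin y(1), of "A i" "pr i"] A[OF i(1)] by simp
          also have "\<dots> = g j" using A[OF i(1)] \<open>J i = j\<close> by simp
          finally show "(\<lambda>j\<in>{..<length L}. qmap (L ! j) y) j = g j" using j by simp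
        qed simp
        then show "g \<in> (\<lambda>a. \<lambda>j\<in>{..<length L}. qmap (L ! j) a) ` carrier R" using y(1) by blast
      qed
    qed
  qed
qed

definition fR :: "(nat ring \<Rightarrow> nat ring \<Rightarrow> (nat \<Rightarrow> nat) \<Rightarrow> 'x \<Rightarrow> 'x) \<Rightarrow> nat ring \<Rightarrow> 'x \<Rightarrow>
    (nat \<times> nat) set \<Rightarrow> (nat \<times> nat) set \<times> (nat ring \<times> 'x)" where
  "fR Xm R x \<pi> = (\<pi>, (qring R \<pi>, Xm R (qring R \<pi>) (qmap \<pi>) x))"

definition Phi :: "(nat ring \<Rightarrow> nat ring \<Rightarrow> (nat \<Rightarrow> nat) \<Rightarrow> 'x \<Rightarrow> 'x) \<Rightarrow> nat ring \<times> 'x \<Rightarrow>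
    ((nat \<times> nat) set \<times> (nat ring \<times> 'x)) list set" where
  "Phi Xm z = Sn_orbit (map (fR Xm (fst z) (snd z)) (enumFP (fst z)))"

lemma map_fst_fR: "map fst (map (fR Xm R x) L) = L"
  by (induction L) (auto simp: fR_def)

lemma Zsp_unpack:
  assumes "(R, x) \<in> Zsp Xo p S"
  obtains n and K :: "nat \<Rightarrow> nat ring" and pr where "ring_on S R" "cring R" "x \<in> Xo R" "carrier R = S"
    "\<And>i. i < n \<Longrightarrow> field (K i)" "\<And>i. i < n \<Longrightarrow> finite (carrier (K i))"
    "\<And>i. i < n \<Longrightarrow> algchar (K i) = p" "\<And>i. i < n \<Longrightarrow> pr i \<in> ring_hom R (K i)"
    "bij_betw (\<lambda>x. \<lambda>i\<in>{..<n}. pr i x) (carrier R) (PiE {..<n} (\<lambda>i. carrier (K i)))"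
proof -
  have H: "ring_on S R" "cring R" "fin_prod_fin_fields p R" "x \<in> Xo R" using assms by (auto simp: Zsp_def)
  then obtain n and K :: "nat \<Rightarrow> nat ring" and pr where
    H2: "\<forall>i<n. field (K i) \<and> finite (carrier (K i)) \<and> algchar (K i) = p \<and> pr i \<in> ring_hom R (K i)"
    "bij_betw (\<lambda>x. \<lambda>i\<in>{..<n}. pr i x) (carrier R) (PiE {..<n} (\<lambda>i. carrier (K i)))"
    unfolding fin_prod_fin_fields_def by blast
  have "carrier R = S" using H(1) by (simp add: ring_on_def)
  show thesis by (rule that[of n K pr]) (use H H2 \<open>carrier R = S\<close> in auto)
qed

lemma equiv_sub: "equiv S \<pi> \<Longrightarrow> \<pi> \<subseteq> S \<times> S"
  unfolding equiv_def refl_on_def by blast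

lemma Zfacts:
  assumes z: "(R, x) \<in> Zsp Xo p S" and fin: "finite S"
  shows "cring R" "carrier R = S" "x \<in> Xo R" "ring_on S R" "finite (FP R)"
    "\<And>\<pi>. \<pi> \<in> FP R \<Longrightarrow> field (qring R \<pi>) \<and> cring (qring R \<pi>) \<and>
      qmap \<pi> \<in> ring_hom R (qring R \<pi>) \<and> algchar (qring R \<pi>) = p \<and>
      ring_on (enc_classes S \<pi>) (qring R \<pi>) \<and> equiv S \<pi> \<and>
      carrier (qring R \<pi>) = enc_classes S \<pi> \<and> qmap \<pi> ` S = enc_classes S \<pi>"
    "\<And>L. distinct L \<Longrightarrow> set L = FP R \<Longrightarrow> bij_betw (\<lambda>a. \<lambda>j\<in>{..<length L}. qmap (L ! j) a) S
           (PiE {..<length L} (\<lambda>j. enc_classes S (L ! j)))"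
proof -
  obtain n and K :: "nat \<Rightarrow> nat ring" and pr where U: "ring_on S R" "cring R" "x \<in> Xo R" "carrier R = S"
    "\<And>i. i < n \<Longrightarrow> field (K i)" "\<And>i. i < n \<Longrightarrow> finite (carrier (K i))"
    "\<And>i. i < n \<Longrightarrow> algchar (K i) = p" "\<And>i. i < n \<Longrightarrow> pr i \<in> ring_hom R (K i)"
    "bij_betw (\<lambda>x. \<lambda>i\<in>{..<n}. pr i x) (carrier R) (PiE {..<n} (\<lambda>i. carrier (K i)))"
    using Zsp_unpack[OF z] by blast
  show "cring R" "carrier R = S" "x \<in> Xo R" "ring_on S R" using U by auto
  have finR: "finite (carrier R)" using U(4) fin by simp
  have D3: "FP R = (\<lambda>i. kerrel R (pr i)) ` {..<n}" by (rule decomp_FP(3)[OF U(2)]) (use U in auto)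
  show "finite (FP R)" unfolding D3 by simp
  show "field (qring R \<pi>) \<and> cring (qring R \<pi>) \<and>
      qmap \<pi> \<in> ring_hom R (qring R \<pi>) \<and> algchar (qring R \<pi>) = p \<and>
      ring_on (enc_classes S \<pi>) (qring R \<pi>) \<and> equiv S \<pi> \<and>
      carrier (qring R \<pi>) = enc_classes S \<pi> \<and> qmap \<pi> ` S = enc_classes S \<pi>" if "\<pi> \<in> FP R" for \<pi>
  proof -
    have "\<exists>i<n. \<pi> = kerrel R (pr i) \<and> field (qring R \<pi>) \<and> cring (qring R \<pi>) \<and>
      qmap \<pi> \<in> ring_hom R (qring R \<pi>) \<and> algchar (qring R \<pi>) = algchar (K i) \<and>
      ring_on (enc_classes (carrier R) \<pi>) (qring R \<pi>) \<and> equiv (carrier R) \<pi> \<and>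
      carrier (qring R \<pi>) = enc_classes (carrier R) \<pi> \<and> qmap \<pi> ` carrier R = enc_classes (carrier R) \<pi>"
      by (rule dec_facts[OF U(2) finR _ _ U(9) that]) (use U in auto)
    then show ?thesis using U(4,7) by auto
  qed
  show "bij_betw (\<lambda>a. \<lambda>j\<in>{..<length L}. qmap (L ! j) a) S (PiE {..<length L} (\<lambda>j. enc_classes S (L ! j)))"
    if "distinct L" "set L = FP R" for L
  proof -
    have "bij_betw (\<lambda>a. \<lambda>j\<in>{..<length L}. qmap (L ! j) a) (carrier R)
           (PiE {..<length L} (\<lambda>j. enc_classes (carrier R) (L ! j)))"
      by (rule dec_bij[OF U(2) finR _ _ U(9) that]) (use U in auto)
    then show ?thesis using U(4) by simp
  qed
qed

lemma Phi_in:
  assumes F: "is_functor Xo Xm" and z: "(R, x) \<in> Zsp Xo p S" and fin: "finite S"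
  shows "map (fR Xm R x) (enumFP R) \<in> DirPow (Fsp Xo p) S" "Phi Xm (R, x) \<in> expD (Fsp Xo p) S"
proof -
  note Z = Zfacts[OF z fin]
  note E = enumFP[OF Z(5)]
  let ?L = "enumFP R"
  let ?ds = "map (fR Xm R x) ?L"
  have "?ds \<in> DirPow (Fsp Xo p) S"
    unfolding DirPow_def
  proof (intro CollectI conjI ballI)
    fix d assume "d \<in> set ?ds"
    then obtain \<pi> where \<pi>: "\<pi> \<in> FP R" "d = fR Xm R x \<pi>" using E by auto
    note P = Z(6)[OF \<pi>(1)]
    show "equiv S (fst d)" using P \<pi>(2) by (simp add: fR_def)
    have "Xm R (qring R \<pi>) (qmap \<pi>) x \<in> Xo (qring R \<pi>)"
      using F_maps[OF F Z(1) _ _ Z(3)] P by blast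
    then show "snd d \<in> Fsp Xo p (enc_classes S (fst d))"
      using P \<pi>(2) by (simp add: fR_def Fsp_def)
  next
    have sub: "\<And>\<pi>. \<pi> \<in> set ?L \<Longrightarrow> \<pi> \<subseteq> S \<times> S" using Z(6) E(2) equiv_sub by blast
    have b: "bij_betw (\<lambda>a. map (\<lambda>\<pi>. \<pi> `` {a}) ?L) S (listset (map (\<lambda>\<pi>. S // \<pi>) ?L))"
      using listset_qmap_bij[OF fin sub] Z(7)[OF E] by simp
    have e1: "(\<lambda>a. map (\<lambda>d. fst d `` {a}) ?ds) = (\<lambda>a. map (\<lambda>\<pi>. \<pi> `` {a}) ?L)"
      by (simp add: fR_def comp_def)
    have e2: "map (\<lambda>d. S // fst d) ?ds = map (\<lambda>\<pi>. S // \<pi>) ?L"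
      by (simp add: fR_def comp_def)
    show "bij_betw (\<lambda>a. map (\<lambda>d. fst d `` {a}) ?ds) S (listset (map (\<lambda>d. S // fst d) ?ds))"
      unfolding e1 e2 by (rule b)
  qed
  then show "?ds \<in> DirPow (Fsp Xo p) S" "Phi Xm (R, x) \<in> expD (Fsp Xo p) S"
    unfolding Phi_def expD_def by auto
qed

lemma separation:
  assumes z: "(R, x) \<in> Zsp Xo p S" and fin: "finite S" and ab: "a \<in> S" "b \<in> S"
    and eq: "\<And>\<pi>. \<pi> \<in> FP R \<Longrightarrow> qmap \<pi> a = qmap \<pi> b"
  shows "a = b"
proof -
  note Z = Zfacts[OF z fin]
  note E = enumFP[OF Z(5)]
  have "(\<lambda>j\<in>{..<length (enumFP R)}. qmap (enumFP R ! j) a) = (\<lambda>j\<in>{..<length (enumFP R)}. qmap (enumFP R ! j) b)"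
    using eq E(2) nth_mem by (intro restrict_ext) blast
  then show ?thesis using Z(7)[OF E] ab unfolding bij_betw_def inj_on_def by blast
qed

lemma Phi_inj:
  fixes Xo :: "nat ring \<Rightarrow> 'x set"
  assumes F: "is_functor Xo Xm" and PP: "preserves_products Xo Xm"
    and z: "(R, x) \<in> Zsp Xo p S" and z': "(R', x') \<in> Zsp Xo p S" and fin: "finite S"
    and eq: "Phi Xm (R, x) = Phi Xm (R', x')"
  shows "R = R' \<and> x = x'"
proof -
  note Z = Zfacts[OF z fin] and Z' = Zfacts[OF z' fin]
  note E = enumFP[OF Z(5)] and E' = enumFP[OF Z'(5)]
  define L where "L = enumFP R"
  define L' where "L' = enumFP R'"
  define ds where "ds = map (fR Xm R x) L"
  define ds' where "ds' = map (fR Xm R' x') L'"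
  have "Sn_orbit ds = Sn_orbit ds'" using eq unfolding Phi_def ds_def ds'_def L_def L'_def by simp
  then obtain t where t: "t permutes {..<length ds'}" "ds = permute_list t ds'"
    using in_Sn_orbit_eq by blast
  have tL: "t permutes {..<length L'}" using t(1) unfolding ds'_def by simp
  have hL: "L = permute_list t L'"
  proof -
    have "L = map fst ds" unfolding ds_def by (simp only: map_fst_fR)
    also have "\<dots> = permute_list t (map fst ds')" using t by (simp add: permute_list_map)
    also have "\<dots> = permute_list t L'" unfolding ds'_def by (simp only: map_fst_fR)
    finally show ?thesis .
  qed
  have FPeq: "FP R = FP R'"
  proof -
    have "set L = set L'" using hL set_permute_list[OF tL] by simp
    then show ?thesis using E(2) E'(2) unfolding L_def L'_def by simp
  qed
  have qeq: "qring R \<pi> = qring R' \<pi>" if "\<pi> \<in> FP R" for \<pi>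
  proof -
    have "\<pi> \<in> set L" using that E(2) unfolding L_def by simp
    then obtain j where j: "j < length L" "L ! j = \<pi>" by (auto simp: in_set_conv_nth)
    have lens: "length L = length L'" using hL by simp
    have jj: "j < length ds'" using j lens unfolding ds'_def by simp
    have tj: "t j < length L'" using permutes_in_image[OF tL] j lens by simp
    have "ds ! j = permute_list t ds' ! j" using t(2) by simp
    also have "\<dots> = ds' ! t j" by (rule permute_list_nth[OF t(1) jj])
    finally have "ds ! j = ds' ! t j" .
    moreover have "ds ! j = fR Xm R x (L ! j)" unfolding ds_def using j(1) by (rule nth_map)
    moreover have "ds' ! t j = fR Xm R' x' (L' ! t j)" unfolding ds'_def using tj by (rule nth_map)
    ultimately have "fR Xm R x (L ! j) = fR Xm R' x' (L' ! t j)" by simp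
    then have e: "fR Xm R x (L ! j) = fR Xm R' x' (L' ! t j)" .
    have e1: "fst (fR Xm R x (L ! j)) = fst (fR Xm R' x' (L' ! t j))" using e by (rule arg_cong)
    have e2: "fst (snd (fR Xm R x (L ! j))) = fst (snd (fR Xm R' x' (L' ! t j)))" using e by (rule arg_cong)
    have "L ! j = L' ! t j" using e1 unfolding fR_def by simp
    moreover have "qring R (L ! j) = qring R' (L' ! t j)" using e2 unfolding fR_def by simp
    ultimately have "qring R (L ! j) = qring R' (L ! j)" by simp
    then show ?thesis using j(2) by simp
  qed
  have RR: "R = R'"
  proof (rule ring_on_eq[OF Z(4) Z'(4)])
    interpret R: cring R by (rule Z(1))
    interpret R': cring R' by (rule Z'(1))
    have hom: "qmap \<pi> \<in> ring_hom R (qring R \<pi>)" "qmap \<pi> \<in> ring_hom R' (qring R \<pi>)"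
      "ring (qring R \<pi>)" if "\<pi> \<in> FP R" for \<pi>
    proof -
      have A: "qmap \<pi> \<in> ring_hom R (qring R \<pi>)" "cring (qring R \<pi>)" using Z(6)[OF that] by blast+
      have "\<pi> \<in> FP R'" using that FPeq by simp
      then have "qmap \<pi> \<in> ring_hom R' (qring R' \<pi>)" using Z'(6) by blast
      then have B: "qmap \<pi> \<in> ring_hom R' (qring R \<pi>)" by (simp only: qeq[OF that])
      show "qmap \<pi> \<in> ring_hom R (qring R \<pi>)" "qmap \<pi> \<in> ring_hom R' (qring R \<pi>)" "ring (qring R \<pi>)"
        using A B cring.axioms(1) by blast+
    qed
    fix a b assume ab: "a \<in> S" "b \<in> S"
    then have ab': "a \<in> carrier R" "b \<in> carrier R" "a \<in> carrier R'" "b \<in> carrier R'" using Z(2) Z'(2) by auto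
    show "a \<otimes>\<^bsub>R\<^esub> b = a \<otimes>\<^bsub>R'\<^esub> b"
    proof (rule separation[OF z fin])
      show "a \<otimes>\<^bsub>R\<^esub> b \<in> S" "a \<otimes>\<^bsub>R'\<^esub> b \<in> S" using ab' Z(2) Z'(2) by auto
      fix \<pi> assume "\<pi> \<in> FP R"
      then show "qmap \<pi> (a \<otimes>\<^bsub>R\<^esub> b) = qmap \<pi> (a \<otimes>\<^bsub>R'\<^esub> b)"
        using ring_hom_mult[OF hom(1) ab'(1,2)] ring_hom_mult[OF hom(2) ab'(3,4)] by simp
    qed
    show "a \<oplus>\<^bsub>R\<^esub> b = a \<oplus>\<^bsub>R'\<^esub> b"
    proof (rule separation[OF z fin])
      show "a \<oplus>\<^bsub>R\<^esub> b \<in> S" "a \<oplus>\<^bsub>R'\<^esub> b \<in> S" using ab' Z(2) Z'(2) by auto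
      fix \<pi> assume "\<pi> \<in> FP R"
      then show "qmap \<pi> (a \<oplus>\<^bsub>R\<^esub> b) = qmap \<pi> (a \<oplus>\<^bsub>R'\<^esub> b)"
        using ring_hom_add[OF hom(1) ab'(1,2)] ring_hom_add[OF hom(2) ab'(3,4)] by simp
    qed
  next
    interpret R: cring R by (rule Z(1))
    interpret R': cring R' by (rule Z'(1))
    have hom: "qmap \<pi> \<in> ring_hom R (qring R \<pi>)" "qmap \<pi> \<in> ring_hom R' (qring R \<pi>)"
      "ring (qring R \<pi>)" if "\<pi> \<in> FP R" for \<pi>
    proof -
      have A: "qmap \<pi> \<in> ring_hom R (qring R \<pi>)" "cring (qring R \<pi>)" using Z(6)[OF that] by blast+
      have "\<pi> \<in> FP R'" using that FPeq by simp
      then have "qmap \<pi> \<in> ring_hom R' (qring R' \<pi>)" using Z'(6) by blast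
      then have B: "qmap \<pi> \<in> ring_hom R' (qring R \<pi>)" by (simp only: qeq[OF that])
      show "qmap \<pi> \<in> ring_hom R (qring R \<pi>)" "qmap \<pi> \<in> ring_hom R' (qring R \<pi>)" "ring (qring R \<pi>)"
        using A B cring.axioms(1) by blast+
    qed
    show "\<one>\<^bsub>R\<^esub> = \<one>\<^bsub>R'\<^esub>"
    proof (rule separation[OF z fin])
      show "\<one>\<^bsub>R\<^esub> \<in> S" "\<one>\<^bsub>R'\<^esub> \<in> S" using Z(2) Z'(2) by auto
      fix \<pi> assume "\<pi> \<in> FP R"
      then show "qmap \<pi> \<one>\<^bsub>R\<^esub> = qmap \<pi> \<one>\<^bsub>R'\<^esub>"
        using ring_hom_one[OF hom(1)] ring_hom_one[OF hom(2)] by simp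
    qed
    show "\<zero>\<^bsub>R\<^esub> = \<zero>\<^bsub>R'\<^esub>"
    proof (rule separation[OF z fin])
      show "\<zero>\<^bsub>R\<^esub> \<in> S" "\<zero>\<^bsub>R'\<^esub> \<in> S" using Z(2) Z'(2) by auto
      fix \<pi> assume p: "\<pi> \<in> FP R"
      show "qmap \<pi> \<zero>\<^bsub>R\<^esub> = qmap \<pi> \<zero>\<^bsub>R'\<^esub>"
        using ring_hom_zero[OF hom(1)[OF p] R.ring_axioms hom(3)[OF p]]
          ring_hom_zero[OF hom(2)[OF p] R'.ring_axioms hom(3)[OF p]] by simp
    qed
  qed
  have LL: "L' = L" unfolding L_def L'_def RR ..
  have "permute_list t ds' = ds'"
    by (rule permute_fix_distinct[of L']) (use E' hL LL tL in \<open>simp_all add: L'_def ds'_def\<close>)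
  then have dd: "ds = ds'" using t(2) by simp
  define K where "K = (\<lambda>j. qring R (L ! j))"
  define pr where "pr = (\<lambda>j. qmap (L ! j))"
  have Kf: "cring (K j) \<and> pr j \<in> ring_hom R (K j)" if "j < length L" for j
    using Z(6)[of "L ! j"] E(2) nth_mem[OF that] unfolding K_def pr_def L_def by auto
  have Bc: "bij_betw (\<lambda>a. \<lambda>j\<in>{..<length L}. pr j a) (carrier R) (PiE {..<length L} (\<lambda>j. carrier (K j)))"
  proof -
    have "PiE {..<length L} (\<lambda>j. carrier (K j)) = PiE {..<length L} (\<lambda>j. enc_classes S (L ! j))"
      using Z(6) E(2) nth_mem unfolding K_def L_def by (intro PiE_cong) auto
    then show ?thesis using Z(7)[OF E] Z(2) unfolding pr_def L_def by simp
  qed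
  have BX: "bij_betw (\<lambda>y. \<lambda>j\<in>{..<length L}. Xm R (K j) (pr j) y) (Xo R) (PiE {..<length L} (\<lambda>j. Xo (K j)))"
    by (rule prod_pres[OF F PP Z(1) Kf Bc])
  have "(\<lambda>j\<in>{..<length L}. Xm R (K j) (pr j) x) = (\<lambda>j\<in>{..<length L}. Xm R (K j) (pr j) x')"
  proof (rule restrict_ext)
    fix j assume j: "j \<in> {..<length L}"
    have "ds ! j = ds' ! j" using dd by simp
    then have "fR Xm R x (L ! j) = fR Xm R x' (L ! j)" using j LL RR unfolding ds_def ds'_def by simp
    then show "Xm R (K j) (pr j) x = Xm R (K j) (pr j) x'" unfolding fR_def K_def pr_def by simp
  qed
  then have "x = x'" using BX Z(3) Z'(3) RR unfolding bij_betw_def inj_on_def by blast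
  then show ?thesis using RR by simp
qed

lemma kerrel_qmap_equiv:
  assumes "equiv S \<pi>" "finite S" "carrier R = S"
  shows "kerrel R (qmap \<pi>) = \<pi>"
proof -
  have sub: "\<pi> \<subseteq> S \<times> S" using assms(1) by (rule equiv_sub)
  have fc: "finite (\<pi> `` {a})" for a using sub assms(2) by (auto intro: finite_subset)
  have "(a, b) \<in> kerrel R (qmap \<pi>) \<longleftrightarrow> (a, b) \<in> \<pi>" for a b
  proof -
    have "(a, b) \<in> kerrel R (qmap \<pi>) \<longleftrightarrow> a \<in> S \<and> b \<in> S \<and> \<pi> `` {a} = \<pi> `` {b}"
      unfolding kerrel_def qmap_def using assms(3) fc by (simp add: set_encode_eq)
    also have "\<dots> \<longleftrightarrow> (a, b) \<in> \<pi>" using eq_equiv_class_iff[OF assms(1)] sub by blast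
    finally show ?thesis .
  qed
  then show ?thesis by auto
qed

lemma Phi_surj:
  fixes Xo :: "nat ring \<Rightarrow> 'x set"
  assumes F: "is_functor Xo Xm" and PP: "preserves_products Xo Xm"
    and fin: "finite S" and ds: "ds \<in> DirPow (Fsp Xo p) S"
  shows "\<exists>z\<in>Zsp Xo p S. Phi Xm z = Sn_orbit ds"
proof -
  define n where "n = length ds"
  define L where "L = map fst ds"
  define Kf where "Kf = (\<lambda>j. fst (snd (ds ! j)))"
  define y where "y = (\<lambda>j. snd (snd (ds ! j)))"
  have lenL: "length L = n" unfolding L_def n_def by simp
  have hd: "\<forall>d\<in>set ds. equiv S (fst d) \<and> snd d \<in> Fsp Xo p (enc_classes S (fst d))"
    and bd: "bij_betw (\<lambda>a. map (\<lambda>d. fst d `` {a}) ds) S (listset (map (\<lambda>d. S // fst d) ds))"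
    using ds unfolding DirPow_def by auto
  have comp: "equiv S (L ! j) \<and> ring_on (enc_classes S (L ! j)) (Kf j) \<and> field (Kf j) \<and>
      algchar (Kf j) = p \<and> y j \<in> Xo (Kf j)" if j: "j < n" for j
  proof -
    have "ds ! j \<in> set ds" using j unfolding n_def by simp
    then have "equiv S (fst (ds ! j)) \<and> snd (ds ! j) \<in> Fsp Xo p (enc_classes S (fst (ds ! j)))"
      using hd by blast
    moreover have "L ! j = fst (ds ! j)" using j unfolding L_def n_def by simp
    ultimately show ?thesis unfolding Kf_def y_def Fsp_def by (cases "snd (ds ! j)") auto
  qed
  have carrK: "carrier (Kf j) = enc_classes S (L ! j)" if "j < n" for j
    using comp[OF that] unfolding ring_on_def by blast
  have cK: "cring (Kf j)" if "j < n" for j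
    using comp[OF that] field.axioms(1) domain.axioms(1) by blast
  have rK: "ring (Kf j)" if "j < n" for j using cK[OF that] cring.axioms(1) by blast
  have sub: "\<pi> \<subseteq> S \<times> S" if pi: "\<pi> \<in> set L" for \<pi>
  proof -
    obtain j where j: "j < length L" "L ! j = \<pi>" using pi by (auto simp: in_set_conv_nth)
    then show ?thesis using comp[of j] equiv_sub lenL by auto
  qed
  define v where "v = (\<lambda>a. \<lambda>j\<in>{..<n}. qmap (L ! j) a)"
  have bv0: "bij_betw v S (PiE {..<n} (\<lambda>j. enc_classes S (L ! j)))"
  proof -
    have e1: "(\<lambda>a. map (\<lambda>d. fst d `` {a}) ds) = (\<lambda>a. map (\<lambda>\<pi>. \<pi> `` {a}) L)"
      unfolding L_def by (simp add: comp_def)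
    have e2: "map (\<lambda>d. S // fst d) ds = map (\<lambda>\<pi>. S // \<pi>) L"
      unfolding L_def by (simp add: comp_def)
    have "bij_betw (\<lambda>a. map (\<lambda>\<pi>. \<pi> `` {a}) L) S (listset (map (\<lambda>\<pi>. S // \<pi>) L))"
      using bd unfolding e1 e2 .
    then show ?thesis using listset_qmap_bij[OF fin sub] lenL unfolding v_def by simp
  qed
  define P where "P = prodR n Kf"
  have carrP: "carrier P = PiE {..<n} (\<lambda>j. enc_classes S (L ! j))"
  proof -
    have "carrier P = PiE {..<n} (\<lambda>j. carrier (Kf j))" unfolding P_def prodR_def by simp
    also have "\<dots> = PiE {..<n} (\<lambda>j. enc_classes S (L ! j))" using carrK by (intro PiE_cong) simp
    finally show ?thesis .
  qed
  have bv: "bij_betw v S (carrier P)" using bv0 carrP by simp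
  have cP: "cring P" unfolding P_def by (rule prodR_cring) (rule cK)
  have rP: "ring P" using cP cring.axioms(1) by blast
  define \<iota> where "\<iota> = inv_into S v"
  have inj\<iota>: "inj_on \<iota> (carrier P)" unfolding \<iota>_def
    by (rule inj_on_inv_into) (use bv in \<open>simp add: bij_betw_def\<close>)
  define R where "R = transp' \<iota> P"
  have cR: "cring R" unfolding R_def by (rule transp'_cring[OF inj\<iota> cP])
  have rR: "ring R" using cR cring.axioms(1) by blast
  have carrR: "carrier R = S"
  proof -
    have "bij_betw \<iota> (carrier P) S" unfolding \<iota>_def by (rule bij_betw_inv_into[OF bv])
    then show ?thesis unfolding R_def transp'_def by (simp add: bij_betw_def)
  qed
  have ronR: "ring_on S R" using carrR unfolding ring_on_def R_def transp'_def by simp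
  have vH: "v \<in> ring_hom R P"
  proof (rule ring_hom_cong[OF _ _ rR])
    show "inv_into (carrier P) \<iota> \<in> ring_hom R P" unfolding R_def by (rule transp'_inv_hom[OF inj\<iota> rP])
    fix a assume "a \<in> carrier R"
    then have a: "a \<in> S" using carrR by simp
    have "\<iota> (v a) = a" unfolding \<iota>_def using bv a by (simp add: bij_betw_def inv_into_f_f)
    moreover have "v a \<in> carrier P" using bv a by (auto simp: bij_betw_def)
    ultimately show "inv_into (carrier P) \<iota> a = v a" using inv_into_f_f[OF inj\<iota>, of "v a"] by simp
  qed
  have prH: "qmap (L ! j) \<in> ring_hom R (Kf j)" if j: "j < n" for j
  proof (rule ring_hom_cong[OF _ _ rR])
    show "(\<lambda>f. f j) \<circ> v \<in> ring_hom R (Kf j)"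
      using ring_hom_trans[OF vH prodR_proj[OF j, of Kf, folded P_def]] .
    fix a show "((\<lambda>f. f j) \<circ> v) a = qmap (L ! j) a" unfolding v_def using j by simp
  qed
  have bvR: "bij_betw (\<lambda>x. \<lambda>i\<in>{..<n}. qmap (L ! i) x) (carrier R) (PiE {..<n} (\<lambda>i. carrier (Kf i)))"
    using bv carrR carrP unfolding v_def P_def prodR_def by simp
  have finK: "finite (carrier (Kf j))" if "j < n" for j
  proof -
    have "finite (S // (L ! j))" using finite_quotient[OF fin sub] that lenL by simp
    then show ?thesis using carrK[OF that] unfolding enc_classes_def by simp
  qed
  have fpf: "fin_prod_fin_fields p R"
    unfolding fin_prod_fin_fields_def
    by (rule exI[of _ n], rule exI[of _ Kf], rule exI[of _ "\<lambda>j. qmap (L ! j)"])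
      (intro conjI allI impI, use comp finK prH bvR in auto)
  have BX: "bij_betw (\<lambda>x. \<lambda>j\<in>{..<n}. Xm R (Kf j) (qmap (L ! j)) x) (Xo R) (PiE {..<n} (\<lambda>j. Xo (Kf j)))"
  proof (rule prod_pres[OF F PP cR _ bvR])
    fix j assume "j < n" then show "cring (Kf j) \<and> qmap (L ! j) \<in> ring_hom R (Kf j)" using cK prH by blast
  qed
  have "(\<lambda>j\<in>{..<n}. y j) \<in> PiE {..<n} (\<lambda>j. Xo (Kf j))" using comp by simp
  then obtain x where x: "x \<in> Xo R" "(\<lambda>j\<in>{..<n}. Xm R (Kf j) (qmap (L ! j)) x) = (\<lambda>j\<in>{..<n}. y j)"
  proof -
    have "(\<lambda>j\<in>{..<n}. y j) \<in> (\<lambda>x. \<lambda>j\<in>{..<n}. Xm R (Kf j) (qmap (L ! j)) x) ` Xo R"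
      using BX \<open>(\<lambda>j\<in>{..<n}. y j) \<in> PiE {..<n} (\<lambda>j. Xo (Kf j))\<close> by (simp add: bij_betw_def)
    then obtain x0 where x0: "(\<lambda>j\<in>{..<n}. y j) = (\<lambda>j\<in>{..<n}. Xm R (Kf j) (qmap (L ! j)) x0)" "x0 \<in> Xo R"
      by (rule imageE)
    show ?thesis by (rule that[OF x0(2) x0(1)[symmetric]])
  qed
  have zin: "(R, x) \<in> Zsp Xo p S" unfolding Zsp_def using ronR cR fpf x(1) by (simp only: mem_Collect_eq case_prod_conv simp_thms)
  have ker: "kerrel R (qmap (L ! j)) = L ! j" if "j < n" for j
  proof -
    have "equiv S (L ! j)" using comp[OF that] by (rule conjunct1)
    then show ?thesis by (rule kerrel_qmap_equiv[OF _ fin carrR])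
  qed
  have fK: "field (Kf j)" if "j < n" for j using comp[OF that] by simp
  have D1: "FP R = (\<lambda>j. kerrel R (qmap (L ! j))) ` {..<n}"
    by (rule decomp_FP(3)[OF cR fK prH bvR])
  have D2: "inj_on (\<lambda>j. kerrel R (qmap (L ! j))) {..<n}"
    by (rule decomp_FP(2)[OF cR fK prH bvR])
  have FPL: "FP R = set L"
  proof -
    have "(\<lambda>j. kerrel R (qmap (L ! j))) ` {..<n} = (\<lambda>j. L ! j) ` {..<n}" using ker by simp
    also have "\<dots> = set L" using lenL by (auto simp: in_set_conv_nth)
    finally show ?thesis using D1 by simp
  qed
  have distL: "distinct L"
  proof -
    have "inj_on (\<lambda>j. L ! j) {..<n}" using D2 inj_on_cong[of "{..<n}" "\<lambda>j. kerrel R (qmap (L ! j))" "\<lambda>j. L ! j"] ker by simp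
    then show ?thesis using lenL unfolding distinct_conv_nth inj_on_def by auto
  qed
  have finFP: "finite (FP R)" using FPL by simp
  note E = enumFP[OF finFP]
  have ms: "mset (enumFP R) = mset L" using set_eq_iff_mset_eq_distinct[OF E(1) distL] E(2) FPL by simp
  have mapeq: "map (fR Xm R x) L = ds"
  proof (rule nth_equalityI)
    show "length (map (fR Xm R x) L) = length ds" unfolding L_def by simp
    fix j assume "j < length (map (fR Xm R x) L)"
    then have j: "j < n" using lenL by simp
    have qr: "qring R (L ! j) = Kf j"
    proof -
      have "qring R (kerrel R (qmap (L ! j))) = Kf j"
      proof (rule qring_id[OF rR rK[OF j] prH[OF j]])
        show "qmap (L ! j) ` carrier R = carrier (Kf j)" using carrR carrK[OF j] by (simp add: enc_classes_qmap)
        show "ring_on (carrier (Kf j)) (Kf j)" using comp[OF j] carrK[OF j] by simp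
        show "finite (carrier R)" using carrR fin by simp
        fix a show "qmap (L ! j) a = qmap (kerrel R (qmap (L ! j))) a" using ker[OF j] by simp
      qed
      then show ?thesis using ker[OF j] by simp
    qed
    have xy: "Xm R (Kf j) (qmap (L ! j)) x = y j" using fun_cong[OF x(2), of j] j by simp
    have "map (fR Xm R x) L ! j = fR Xm R x (L ! j)" using j lenL by simp
    also have "\<dots> = (L ! j, Kf j, y j)" unfolding fR_def qr xy ..
    also have "\<dots> = ds ! j" unfolding L_def Kf_def y_def using j n_def by simp
    finally show "map (fR Xm R x) L ! j = ds ! j" .
  qed
  have "Phi Xm (R, x) = Sn_orbit (map (fR Xm R x) (enumFP R))" unfolding Phi_def by simp
  also have "\<dots> = Sn_orbit (map (fR Xm R x) L)" by (rule Sn_orbit_mset) (simp add: ms)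
  also have "\<dots> = Sn_orbit ds" unfolding mapeq ..
  finally show ?thesis using zin by blast
qed

definition himg :: "(nat \<Rightarrow> nat) \<Rightarrow> (nat \<times> nat) set \<Rightarrow> (nat \<times> nat) set" where
  "himg sg \<pi> = (\<lambda>(a, b). (sg a, sg b)) ` \<pi>"

lemma himg_class:
  assumes inj: "inj_on sg S" and sub: "\<pi> \<subseteq> S \<times> S" and a: "a \<in> S"
  shows "himg sg \<pi> `` {sg a} = sg ` (\<pi> `` {a})"
proof
  show "himg sg \<pi> `` {sg a} \<subseteq> sg ` (\<pi> `` {a})"
  proof
    fix y assume "y \<in> himg sg \<pi> `` {sg a}"
    then obtain a0 b where ab: "(a0, b) \<in> \<pi>" "sg a0 = sg a" "y = sg b" unfolding himg_def by auto
    then have "a0 = a" using inj sub a unfolding inj_on_def by blast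
    then show "y \<in> sg ` (\<pi> `` {a})" using ab by auto
  qed
  show "sg ` (\<pi> `` {a}) \<subseteq> himg sg \<pi> `` {sg a}" unfolding himg_def by auto
qed

lemma kerrel_transp:
  assumes sg: "bij_betw sg S S'" and cR: "carrier R = S" and cR': "carrier R' = S'"
    and sub: "\<And>a b. (a, b) \<in> kerrel R f \<Longrightarrow> True"
  shows "kerrel R' (f \<circ> inv_into S sg) = himg sg (kerrel R f)"
proof
  have inj: "inj_on sg S" and im: "sg ` S = S'" using sg by (auto simp: bij_betw_def)
  show "kerrel R' (f \<circ> inv_into S sg) \<subseteq> himg sg (kerrel R f)"
  proof
    fix p assume "p \<in> kerrel R' (f \<circ> inv_into S sg)"
    then obtain a' b' where p: "p = (a', b')" "a' \<in> S'" "b' \<in> S'" "f (inv_into S sg a') = f (inv_into S sg b')"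
      unfolding kerrel_def cR' by auto
    define a where "a = inv_into S sg a'"
    define b where "b = inv_into S sg b'"
    have ab: "a \<in> S" "b \<in> S" "sg a = a'" "sg b = b'"
      using p(2,3) im unfolding a_def b_def by (auto intro: inv_into_into f_inv_into_f)
    have "(a, b) \<in> kerrel R f" using ab p(4) cR unfolding kerrel_def a_def b_def by simp
    then show "p \<in> himg sg (kerrel R f)" unfolding himg_def using ab p(1) by force
  qed
  show "himg sg (kerrel R f) \<subseteq> kerrel R' (f \<circ> inv_into S sg)"
  proof
    fix p assume "p \<in> himg sg (kerrel R f)"
    then obtain a b where p: "p = (sg a, sg b)" "a \<in> S" "b \<in> S" "f a = f b"
      unfolding himg_def kerrel_def cR by auto
    have "inv_into S sg (sg a) = a" "inv_into S sg (sg b) = b" using inj p by (auto simp: inv_into_f_f)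
    then show "p \<in> kerrel R' (f \<circ> inv_into S sg)" using p im cR' unfolding kerrel_def by auto
  qed
qed

lemma component_nat:
  fixes Xo :: "nat ring \<Rightarrow> 'x set" and R R' :: "nat ring"
  assumes F: "is_functor Xo Xm" and cR: "cring R" and carrR: "carrier R = S" and fin: "finite S"
    and sg: "bij_betw sg S S'" and R'def: "R' = transp' sg R" and x: "x \<in> Xo R"
    and fQ: "field (qring R \<pi>)" and qH: "qmap \<pi> \<in> ring_hom R (qring R \<pi>)" and eqv: "equiv S \<pi>"
    and carrQ: "carrier (qring R \<pi>) = enc_classes S \<pi>"
  defines "\<tau> \<equiv> \<lambda>c. set_encode (sg ` set_decode c)"
  shows "qring R' (himg sg \<pi>) = transp' \<tau> (qring R \<pi>)"
    "Xm R' (qring R' (himg sg \<pi>)) (qmap (himg sg \<pi>)) (Xm R R' sg x) =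
     Xm (qring R \<pi>) (transp' \<tau> (qring R \<pi>)) \<tau> (Xm R (qring R \<pi>) (qmap \<pi>) x)"
proof -
  have inj: "inj_on sg S" and im: "sg ` S = S'" using sg by (auto simp: bij_betw_def)
  have sub: "\<pi> \<subseteq> S \<times> S" using eqv by (rule equiv_sub)
  have fincl: "finite (\<pi> `` {a})" for a using sub fin by (auto intro: finite_subset)
  have rR: "ring R" using cR cring.axioms(1) by blast
  let ?Q = "qring R \<pi>"
  have cQ: "cring ?Q" using fQ field.axioms(1) domain.axioms(1) by blast
  have rQ: "ring ?Q" using cQ cring.axioms(1) by blast
  have injR: "inj_on sg (carrier R)" using inj carrR by simp
  have cR': "cring R'" unfolding R'def by (rule transp'_cring[OF injR cR])
  have rR': "ring R'" using cR' cring.axioms(1) by blast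
  have carrR': "carrier R' = S'" unfolding R'def transp'_def using carrR im by simp
  have sgH: "sg \<in> ring_hom R R'" using transp'_hom[OF injR rR] unfolding R'def ring_iso_def by blast
  have invH: "inv_into S sg \<in> ring_hom R' R"
    using transp'_inv_hom[OF injR rR] unfolding R'def carrR .
  have tau_q: "\<tau> (qmap \<pi> a) = set_encode (sg ` (\<pi> `` {a}))" for a
    unfolding \<tau>_def qmap_def using fincl by simp
  have injT: "inj_on \<tau> (carrier ?Q)"
  proof (rule inj_onI)
    fix c1 c2 assume c: "c1 \<in> carrier ?Q" "c2 \<in> carrier ?Q" "\<tau> c1 = \<tau> c2"
    obtain a1 where a1: "a1 \<in> S" "c1 = qmap \<pi> a1" using c(1) carrQ by (auto simp: enc_classes_qmap)
    obtain a2 where a2: "a2 \<in> S" "c2 = qmap \<pi> a2" using c(2) carrQ by (auto simp: enc_classes_qmap)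
    have "set_encode (sg ` (\<pi> `` {a1})) = set_encode (sg ` (\<pi> `` {a2}))" using c(3) a1 a2 tau_q by simp
    then have "sg ` (\<pi> `` {a1}) = sg ` (\<pi> `` {a2})" using fincl by (simp add: set_encode_eq)
    moreover have "\<pi> `` {a1} \<subseteq> S" "\<pi> `` {a2} \<subseteq> S" using sub by auto
    ultimately have "\<pi> `` {a1} = \<pi> `` {a2}" using inj by (simp add: inj_on_image_eq_iff)
    then show "c1 = c2" using a1 a2 unfolding qmap_def by simp
  qed
  let ?Q' = "transp' \<tau> ?Q"
  have fQ': "field ?Q'" by (rule transp'_field[OF injT fQ])
  have cQ': "cring ?Q'" using fQ' field.axioms(1) domain.axioms(1) by blast
  have rQ': "ring ?Q'" using cQ' cring.axioms(1) by blast
  have tH: "\<tau> \<in> ring_hom ?Q ?Q'" using transp'_hom[OF injT rQ] unfolding ring_iso_def by blast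
  define q where "q = \<tau> \<circ> qmap \<pi> \<circ> inv_into S sg"
  have qHom: "q \<in> ring_hom R' ?Q'" unfolding q_def
    by (rule ring_hom_trans[OF invH ring_hom_trans[OF qH tH]])
  have invS: "inv_into S sg a' \<in> S" "sg (inv_into S sg a') = a'" if "a' \<in> S'" for a'
    using that im by (auto intro: inv_into_into f_inv_into_f)
  have qh: "q a' = qmap (himg sg \<pi>) a'" if a': "a' \<in> S'" for a'
  proof -
    define a where "a = inv_into S sg a'"
    have a: "a \<in> S" "sg a = a'" using invS[OF a'] unfolding a_def by auto
    have "q a' = set_encode (sg ` (\<pi> `` {a}))" unfolding q_def a_def by (simp add: tau_q)
    also have "\<dots> = set_encode (himg sg \<pi> `` {a'})" using himg_class[OF inj sub a(1)] a(2) by simp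
    finally show ?thesis unfolding qmap_def .
  qed
  have kq: "kerrel R' q = himg sg \<pi>"
  proof -
    have ker\<pi>: "kerrel R (qmap \<pi>) = \<pi>" by (rule kerrel_qmap_equiv[OF eqv fin carrR])
    have "q = (\<tau> \<circ> qmap \<pi>) \<circ> inv_into S sg" unfolding q_def by (simp add: comp_assoc)
    then have "kerrel R' q = himg sg (kerrel R (\<tau> \<circ> qmap \<pi>))"
      using kerrel_transp[OF sg carrR carrR'] by simp
    moreover have "kerrel R (\<tau> \<circ> qmap \<pi>) = kerrel R (qmap \<pi>)"
    proof -
      have "qmap \<pi> a \<in> carrier ?Q" if "a \<in> carrier R" for a using ring_hom_closed[OF qH that] .
      then show ?thesis unfolding kerrel_def using injT by (auto simp: inj_on_def)
    qed
    ultimately show ?thesis using ker\<pi> by simp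
  qed
  have img: "q ` carrier R' = carrier ?Q'"
  proof -
    have "inv_into S sg ` S' = S" using bij_betw_inv_into[OF sg] by (simp add: bij_betw_def)
    have "q ` S' = \<tau> ` (qmap \<pi> ` (inv_into S sg ` S'))" unfolding q_def by (simp only: image_comp comp_assoc)
    then have "q ` S' = \<tau> ` (qmap \<pi> ` S)" using \<open>inv_into S sg ` S' = S\<close> by simp
    also have "\<dots> = \<tau> ` carrier ?Q" using carrQ by (simp add: enc_classes_qmap)
    finally show ?thesis using carrR' by (simp add: transp'_def)
  qed
  have "qring R' (kerrel R' q) = ?Q'"
  proof (rule qring_id[OF rR' rQ' qHom img])
    show "ring_on (carrier ?Q') ?Q'" by (simp add: ring_on_def transp'_def)
    show "finite (carrier R')" using carrR' fin im finite_imageI[OF fin, of sg] by simp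
    fix a' assume "a' \<in> carrier R'"
    then show "q a' = qmap (kerrel R' q) a'" using qh carrR' kq by simp
  qed
  then show Q1: "qring R' (himg sg \<pi>) = ?Q'" unfolding kq .
  have qmH: "qmap (himg sg \<pi>) \<in> ring_hom R' ?Q'"
    by (rule ring_hom_cong[OF qHom _ rR']) (use qh carrR' in simp)
  have "Xm R' ?Q' (qmap (himg sg \<pi>)) (Xm R R' sg x) = Xm R ?Q' (qmap (himg sg \<pi>) \<circ> sg) x"
    by (rule F_comp[OF F cR cR' cQ' sgH qmH x, symmetric])
  also have "\<dots> = Xm R ?Q' (\<tau> \<circ> qmap \<pi>) x"
  proof (rule F_cong[OF F cR cQ' ring_hom_trans[OF sgH qmH] ring_hom_trans[OF qH tH] _ x])
    fix a assume a: "a \<in> carrier R"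
    then have aS: "a \<in> S" using carrR by simp
    have "sg a \<in> S'" using aS im by auto
    moreover have "inv_into S sg (sg a) = a" using inj aS by (simp add: inv_into_f_f)
    ultimately show "(qmap (himg sg \<pi>) \<circ> sg) a = (\<tau> \<circ> qmap \<pi>) a" using qh[of "sg a"] unfolding q_def by simp
  qed
  also have "\<dots> = Xm ?Q ?Q' \<tau> (Xm R ?Q (qmap \<pi>) x)"
    by (rule F_comp[OF F cR cQ cQ' qH tH x])
  finally show "Xm R' (qring R' (himg sg \<pi>)) (qmap (himg sg \<pi>)) (Xm R R' sg x) =
     Xm ?Q ?Q' \<tau> (Xm R ?Q (qmap \<pi>) x)" unfolding Q1 .
qed

lemma Phi_nat:
  fixes Xo :: "nat ring \<Rightarrow> 'x set"
  assumes F: "is_functor Xo Xm" and z: "(R, x) \<in> Zsp Xo p S" and fin: "finite S"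
    and sg: "bij_betw sg S S'"
  shows "Phi Xm (transp_struct Xm sg (R, x)) = transp_expD (transp_struct Xm) sg (Phi Xm (R, x))"
proof -
  note Z = Zfacts[OF z fin]
  obtain n and K :: "nat \<Rightarrow> nat ring" and pr where U: "ring_on S R" "cring R" "x \<in> Xo R" "carrier R = S"
    "\<And>i. i < n \<Longrightarrow> field (K i)" "\<And>i. i < n \<Longrightarrow> finite (carrier (K i))"
    "\<And>i. i < n \<Longrightarrow> algchar (K i) = p" "\<And>i. i < n \<Longrightarrow> pr i \<in> ring_hom R (K i)"
    "bij_betw (\<lambda>x. \<lambda>i\<in>{..<n}. pr i x) (carrier R) (PiE {..<n} (\<lambda>i. carrier (K i)))"
    using Zsp_unpack[OF z] by blast
  have inj: "inj_on sg S" and im: "sg ` S = S'" using sg by (auto simp: bij_betw_def)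
  define R' where "R' = transp' sg R"
  define x' where "x' = Xm R R' sg x"
  have ts: "transp_struct Xm sg (R, x) = (R', x')"
    unfolding transp_struct_def R'_def x'_def transp_ring_eq by simp
  have rR: "ring R" using Z(1) cring.axioms(1) by blast
  have injR: "inj_on sg (carrier R)" using inj Z(2) by simp
  have cR': "cring R'" unfolding R'_def by (rule transp'_cring[OF injR Z(1)])
  have carrR': "carrier R' = S'" unfolding R'_def transp'_def using Z(2) im by simp
  have invH: "inv_into S sg \<in> ring_hom R' R"
    using transp'_inv_hom[OF injR rR] unfolding R'_def Z(2) .
  define pr' where "pr' = (\<lambda>i. pr i \<circ> inv_into S sg)"
  have pr'H: "pr' i \<in> ring_hom R' (K i)" if "i < n" for i
    unfolding pr'_def by (rule ring_hom_trans[OF invH U(8)[OF that]])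
  have B': "bij_betw (\<lambda>x. \<lambda>i\<in>{..<n}. pr' i x) (carrier R') (PiE {..<n} (\<lambda>i. carrier (K i)))"
  proof -
    have "bij_betw ((\<lambda>x. \<lambda>i\<in>{..<n}. pr i x) \<circ> inv_into S sg) S' (PiE {..<n} (\<lambda>i. carrier (K i)))"
      by (rule bij_betw_trans[OF bij_betw_inv_into[OF sg]]) (use U(9) Z(2) in simp)
    moreover have "(\<lambda>x. \<lambda>i\<in>{..<n}. pr i x) \<circ> inv_into S sg = (\<lambda>x. \<lambda>i\<in>{..<n}. pr' i x)"
      unfolding pr'_def by (simp add: fun_eq_iff)
    ultimately show ?thesis using carrR' by simp
  qed
  have D3: "FP R = (\<lambda>i. kerrel R (pr i)) ` {..<n}" by (rule decomp_FP(3)[OF U(2) U(5) U(8) U(9)])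
  have D3': "FP R' = (\<lambda>i. kerrel R' (pr' i)) ` {..<n}" by (rule decomp_FP(3)[OF cR' U(5) pr'H B'])
  have kh: "kerrel R' (pr' i) = himg sg (kerrel R (pr i))" for i
    unfolding pr'_def by (rule kerrel_transp[OF sg Z(2) carrR']) simp
  have FP': "FP R' = himg sg ` FP R" unfolding D3' D3 kh by (simp add: image_comp comp_def)
  have injh: "inj_on (himg sg) (FP R)"
  proof -
    have "inj_on (\<lambda>(a, b). (sg a, sg b)) (S \<times> S)" using inj unfolding inj_on_def by auto
    then have "inj_on (image (\<lambda>(a, b). (sg a, sg b))) (Pow (S \<times> S))" by (rule inj_on_image_Pow)
    moreover have "FP R \<subseteq> Pow (S \<times> S)" using Z(6) equiv_sub by blast
    ultimately have "inj_on (image (\<lambda>(a, b). (sg a, sg b))) (FP R)" by (rule inj_on_subset)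
    then show ?thesis unfolding himg_def[abs_def] .
  qed
  note E = enumFP[OF Z(5)]
  define L where "L = enumFP R"
  have finFP': "finite (FP R')" unfolding FP' using Z(5) by simp
  note E' = enumFP[OF finFP']
  have ms: "mset (enumFP R') = mset (map (himg sg) L)"
  proof -
    have d: "distinct (map (himg sg) L)" unfolding L_def using E injh by (simp add: distinct_map)
    have "set (map (himg sg) L) = FP R'" unfolding L_def using E FP' by simp
    then have seteq: "set (enumFP R') = set (map (himg sg) L)" using E'(2) by simp
    show ?thesis by (rule iffD1[OF set_eq_iff_mset_eq_distinct[OF E'(1) d] seteq])
  qed
  define \<tau> where "\<tau> = (\<lambda>c. set_encode (sg ` set_decode c))"
  define G where "G = (\<lambda>d :: (nat \<times> nat) set \<times> (nat ring \<times> 'x). ((\<lambda>(a, b). (sg a, sg b)) ` fst d,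
              transp_struct Xm (\<lambda>c. set_encode (sg ` set_decode c)) (snd d)))"
  have comp: "fR Xm R' x' (himg sg \<pi>) = G (fR Xm R x \<pi>)" if \<pi>: "\<pi> \<in> set L" for \<pi>
  proof -
    have P: "field (qring R \<pi>)" "qmap \<pi> \<in> ring_hom R (qring R \<pi>)" "equiv S \<pi>"
      "carrier (qring R \<pi>) = enc_classes S \<pi>"
      using Z(6)[of \<pi>] \<pi> E(2) unfolding L_def by auto
    note C = component_nat[OF F Z(1) Z(2) fin sg R'_def Z(3) P, folded \<tau>_def x'_def]
    show ?thesis
      unfolding fR_def G_def transp_struct_def transp_ring_eq
      using C by (simp add: himg_def \<tau>_def)
  qed
  have "Phi Xm (transp_struct Xm sg (R, x)) = Sn_orbit (map (fR Xm R' x') (enumFP R'))"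
    unfolding ts Phi_def by simp
  also have "\<dots> = Sn_orbit (map (fR Xm R' x') (map (himg sg) L))"
    by (rule Sn_orbit_mset) (simp only: mset_map ms)
  also have "map (fR Xm R' x') (map (himg sg) L) = map G (map (fR Xm R x) L)"
    using comp by simp
  also have "Sn_orbit (map G (map (fR Xm R x) L)) = map G ` Sn_orbit (map (fR Xm R x) L)"
    by (rule Sn_orbit_map[symmetric])
  also have "\<dots> = transp_expD (transp_struct Xm) sg (Phi Xm (R, x))"
    unfolding transp_expD_def Phi_def G_def L_def by simp
  finally show ?thesis .
qed

theorem lemma4p5:
  fixes Xo :: "nat ring \<Rightarrow> 'x set"
    and Xm :: "nat ring \<Rightarrow> nat ring \<Rightarrow> (nat \<Rightarrow> nat) \<Rightarrow> 'x \<Rightarrow> 'x"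
    and p :: nat
  assumes "is_functor Xo Xm"
    and "preserves_products Xo Xm"
    and "Factorial_Ring.prime p"
  shows "species_iso (Zsp Xo p) (transp_struct Xm)
                     (expD (Fsp Xo p)) (transp_expD (transp_struct Xm))"
  unfolding species_iso_def
proof (rule exI[of _ "\<lambda>S. Phi Xm"], intro conjI allI impI ballI)
  fix S :: "nat set" assume fin: "finite S"
  show "bij_betw (Phi Xm) (Zsp Xo p S) (expD (Fsp Xo p) S)"
    unfolding bij_betw_def
  proof (intro conjI)
    show "inj_on (Phi Xm) (Zsp Xo p S)"
    proof (rule inj_onI)
      fix z z' assume zz: "z \<in> Zsp Xo p S" "z' \<in> Zsp Xo p S" "Phi Xm z = Phi Xm z'"
      obtain R x where z: "z = (R, x)" by (cases z)
      obtain R' x' where z': "z' = (R', x')" by (cases z')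
      show "z = z'" using Phi_inj[OF assms(1,2) zz(1)[unfolded z] zz(2)[unfolded z'] fin zz(3)[unfolded z z']] z z'
        by simp
    qed
    show "Phi Xm ` Zsp Xo p S = expD (Fsp Xo p) S"
    proof
      show "Phi Xm ` Zsp Xo p S \<subseteq> expD (Fsp Xo p) S"
      proof (rule image_subsetI)
        fix z assume zin: "z \<in> Zsp Xo p S"
        obtain R x where z: "z = (R, x)" by (cases z)
        show "Phi Xm z \<in> expD (Fsp Xo p) S" using Phi_in(2)[OF assms(1) zin[unfolded z] fin] z by simp
      qed
      show "expD (Fsp Xo p) S \<subseteq> Phi Xm ` Zsp Xo p S"
      proof
        fix Orb assume "Orb \<in> expD (Fsp Xo p) S"
        then obtain ds where ds: "ds \<in> DirPow (Fsp Xo p) S" "Orb = Sn_orbit ds" unfolding expD_def by auto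
        obtain z where "z \<in> Zsp Xo p S" "Phi Xm z = Sn_orbit ds" using Phi_surj[OF assms(1,2) fin ds(1)] by blast
        then show "Orb \<in> Phi Xm ` Zsp Xo p S" using ds(2) by blast
      qed
    qed
  qed
next
  fix S S' :: "nat set" and sg z
  assume h: "finite S \<and> bij_betw sg S S'" and zin: "z \<in> Zsp Xo p S"
  obtain R x where z: "z = (R, x)" by (cases z)
  show "Phi Xm (transp_struct Xm sg z) = transp_expD (transp_struct Xm) sg (Phi Xm z)"
    using Phi_nat[OF assms(1) zin[unfolded z] conjunct1[OF h] conjunct2[OF h]] z by simp
qed

end
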